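(* There exist quantum circuits of depth $O(1)$ (independent of $n,t$) implementing exactly the quantum operation $\mathrm{TH}_n^t$, with: (i) size $O(tn\log n)$ for any $1\le t\le\lceil n/2\rceil$; (ii) size $O((n-t+1)n\log n)$ for any $\lceil n/2\rceil\le t\le n$.
   Context: Quantum circuits are built from elementary gates: arbitrary one-qubit gates, CNOT gates, and unbounded fan-out gates. An unbounded fan-out gate on $k+1$ qubits ($k\ge1$) maps $|y\rangle\bigotimes_{j=0}^{k-1}|x_j\rangle \mapsto |y\rangle\bigotimes_{j=0}^{k-1}|x_j\oplus y\rangle$. Circuits may use ancillary qubits initialized to $|0\rangle$. The size of a circuit is the total over its gates of the number of qubits each gate acts on; the depth is the number of layers. For $1\le t\le n$ and $x\in\{0,1\}^n$ with Hamming weight $|x|$, $\mathrm{TH}_n^t(x)=1$ if $|x|\ge t$ and $0$ otherwise; the quantum operation $\mathrm{TH}_n^t$ maps $\bigl(\bigotimes_j|x_j\rangle\bigr)|z\rangle\mapsto\bigl(\bigotimes_j|x_j\rangle\bigr)|z\oplus\mathrm{TH}_n^t(x)\rangle$. Logarithms are base 2. *)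

theory Defs
  imports Complex_Main
begin

type_synonym basis = "nat \<Rightarrow> bool"
type_synonym state = "basis \<Rightarrow> complex"

text \<open>Elementary gates: an arbitrary one-qubit gate (given by a 2x2 matrix,
  U out in), a CNOT (control, target), and an unbounded fan-out gate
  (control y, targets xs).\<close>

datatype gate =
    G1 nat "bool \<Rightarrow> bool \<Rightarrow> complex"
  | CNOT nat nat
  | FanOut nat "nat list"

definition unitary2 :: "(bool \<Rightarrow> bool \<Rightarrow> complex) \<Rightarrow> bool" where
  "unitary2 U \<longleftrightarrow>
     (\<forall>a a'. (\<Sum>b\<in>UNIV. cnj (U b a) * U b a') = (if a = a' then 1 else 0))"

fun qubits :: "gate \<Rightarrow> nat set" where
  "qubits (G1 q U) = {q}"
| "qubits (CNOT c t) = {c, t}"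
| "qubits (FanOut y ts) = insert y (set ts)"

fun wf_gate :: "gate \<Rightarrow> bool" where
  "wf_gate (G1 q U) = unitary2 U"
| "wf_gate (CNOT c t) = (c \<noteq> t)"
| "wf_gate (FanOut y ts) = (ts \<noteq> [] \<and> distinct ts \<and> y \<notin> set ts)"

fun gate_size :: "gate \<Rightarrow> nat" where
  "gate_size (G1 q U) = 1"
| "gate_size (CNOT c t) = 2"
| "gate_size (FanOut y ts) = length ts + 1"

fun apply_gate :: "gate \<Rightarrow> state \<Rightarrow> state" where
  "apply_gate (G1 q U) \<psi> = (\<lambda>x. \<Sum>b\<in>UNIV. U (x q) b * \<psi> (x(q := b)))"
| "apply_gate (CNOT c t) \<psi> = (\<lambda>x. \<psi> (x(t := (x t \<noteq> x c))))"
| "apply_gate (FanOut y ts) \<psi> =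
     (\<lambda>x. \<psi> (\<lambda>i. if i \<in> set ts then x i \<noteq> x y else x i))"

type_synonym layer = "gate list"
type_synonym circuit = "layer list"

definition wf_layer :: "layer \<Rightarrow> bool" where
  "wf_layer L \<longleftrightarrow> (\<forall>g\<in>set L. wf_gate g) \<and>
     (\<forall>i j. i < length L \<and> j < length L \<and> i \<noteq> j \<longrightarrow>
            qubits (L ! i) \<inter> qubits (L ! j) = {})"

definition wf_circuit :: "circuit \<Rightarrow> bool" where
  "wf_circuit C \<longleftrightarrow> (\<forall>L\<in>set C. wf_layer L)"

definition apply_layer :: "layer \<Rightarrow> state \<Rightarrow> state" where
  "apply_layer L \<psi> = fold apply_gate L \<psi>"

definition run :: "circuit \<Rightarrow> state \<Rightarrow> state" where
  "run C \<psi> = fold apply_layer C \<psi>"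

definition depth :: "circuit \<Rightarrow> nat" where
  "depth C = length C"

definition csize :: "circuit \<Rightarrow> nat" where
  "csize C = (\<Sum>L\<leftarrow>C. \<Sum>g\<leftarrow>L. gate_size g)"

definition ket :: "basis \<Rightarrow> state" where
  "ket x = (\<lambda>y. if y = x then 1 else 0)"

definition TH :: "nat \<Rightarrow> nat \<Rightarrow> basis \<Rightarrow> bool" where
  "TH n t x \<longleftrightarrow> t \<le> card {i. i < n \<and> x i}"

text \<open>C implements TH_n^t exactly: inputs on qubits 0..n-1, output on qubit n,
  all other qubits are ancillas initialised to 0 and returned to 0.
  (By linearity, correctness on basis states gives correctness on all states.)\<close>
definition implements_TH :: "nat \<Rightarrow> nat \<Rightarrow> circuit \<Rightarrow> bool" where
  "implements_TH n t C \<longleftrightarrow> wf_circuit C \<and>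
     (\<forall>x. (\<forall>i>n. \<not> x i) \<longrightarrow>
        run C (ket x) = ket (x(n := (x n \<noteq> TH n t x))))"

end

theory Submission
  imports Defs "HOL-Library.Nat_Bijection"
begin


definition r2 :: complex where "r2 = complex_of_real (1 / sqrt 2)"
definition Hm :: "bool \<Rightarrow> bool \<Rightarrow> complex" where "Hm a b = (if a \<and> b then - r2 else r2)"
definition pm :: "real \<Rightarrow> bool \<Rightarrow> bool \<Rightarrow> complex" where
  "pm \<alpha> a b = (if a = b then (if a then cis \<alpha> else 1) else 0)"
definition Xm :: "bool \<Rightarrow> bool \<Rightarrow> complex" where "Xm a b = (if a \<noteq> b then 1 else 0)"

definition upd :: "nat set \<Rightarrow> nat set \<Rightarrow> basis \<Rightarrow> basis" where
  "upd Q B w = (\<lambda>j. if j \<in> Q then j \<in> B else w j)"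
definition sg :: "basis \<Rightarrow> nat set \<Rightarrow> complex" where
  "sg w B = (\<Prod>a\<in>B. if w a then -1 else 1)"
definition had :: "nat set \<Rightarrow> state \<Rightarrow> state" where
  "had Q \<psi> = (\<lambda>w. r2 ^ card Q * (\<Sum>B\<in>Pow Q. sg w B * \<psi> (upd Q B w)))"

lemma r2_sq: "r2 * r2 = 1/2"
  unfolding r2_def by (simp flip: of_real_mult)

lemma unitary_Hm: "unitary2 Hm"
  unfolding unitary2_def Hm_def
  by (auto simp: UNIV_bool r2_def simp flip: of_real_mult)

lemma unitary_pm: "unitary2 (pm a)"
  unfolding unitary2_def pm_def
  by (auto simp: UNIV_bool cis_cnj cis_mult)

lemma unitary_Xm: "unitary2 Xm"
  unfolding unitary2_def Xm_def by (auto simp: UNIV_bool)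

lemma sum_Pow_insert:
  assumes "finite Q" "q \<notin> Q"
  shows "(\<Sum>B\<in>Pow (insert q Q). f B) = (\<Sum>B\<in>Pow Q. f B) + (\<Sum>B\<in>Pow Q. f (insert q B))"
proof -
  have "(\<Sum>B\<in>Pow (insert q Q). f B) = (\<Sum>B\<in>Pow Q \<union> insert q ` Pow Q. f B)"
    by (simp add: Pow_insert)
  also have "\<dots> = (\<Sum>B\<in>Pow Q. f B) + (\<Sum>B\<in>insert q ` Pow Q. f B)"
    by (rule sum.union_disjoint) (use assms in auto)
  also have "(\<Sum>B\<in>insert q ` Pow Q. f B) = (\<Sum>B\<in>Pow Q. f (insert q B))"
    by (subst sum.reindex) (use assms in \<open>auto intro!: inj_onI simp: o_def\<close>)
  finally show ?thesis .
qed

lemma apply_layer_Cons: "apply_layer (g # L) \<psi> = apply_layer L (apply_gate g \<psi>)"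
  by (simp add: apply_layer_def)
lemma apply_layer_Nil: "apply_layer [] \<psi> = \<psi>"
  by (simp add: apply_layer_def)
lemma apply_layer_append: "apply_layer (L1 @ L2) \<psi> = apply_layer L2 (apply_layer L1 \<psi>)"
  by (simp add: apply_layer_def)

lemma G1_apply: "apply_gate (G1 q U) \<psi> x = U (x q) False * \<psi> (x(q:=False)) + U (x q) True * \<psi> (x(q:=True))"
  by (simp add: UNIV_bool add.commute)

lemma had_empty: "had {} \<psi> = \<psi>"
  unfolding had_def sg_def upd_def by simp

lemma had_insert:
  assumes "finite Q" "q \<notin> Q"
  shows "had Q (apply_gate (G1 q Hm) \<psi>) = had (insert q Q) \<psi>"
proof
  fix w
  have sgi: "sg w (insert q B) = (if w q then -1 else 1) * sg w B" if "B \<in> Pow Q" for B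
    unfolding sg_def using that assms finite_subset[of B Q] by (subst prod.insert) auto
  have u1: "upd (insert q Q) B w = (upd Q B w)(q := False)" if "B \<in> Pow Q" for B
    using that assms unfolding upd_def by (auto simp: fun_eq_iff)
  have u2: "upd (insert q Q) (insert q B) w = (upd Q B w)(q := True)" if "B \<in> Pow Q" for B
    using that assms unfolding upd_def by (auto simp: fun_eq_iff)
  have uq: "upd Q B w q = w q" for B using assms unfolding upd_def by auto
  have "had (insert q Q) \<psi> w = r2 ^ card Q * r2 *
      ((\<Sum>B\<in>Pow Q. sg w B * \<psi> (upd (insert q Q) B w)) +
       (\<Sum>B\<in>Pow Q. sg w (insert q B) * \<psi> (upd (insert q Q) (insert q B) w)))"
    unfolding had_def using assms by (simp add: sum_Pow_insert mult_ac)
  also have "\<dots> = r2 ^ card Q * r2 *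
      ((\<Sum>B\<in>Pow Q. sg w B * \<psi> ((upd Q B w)(q := False))) +
       (\<Sum>B\<in>Pow Q. (if w q then -1 else 1) * sg w B * \<psi> ((upd Q B w)(q := True))))"
    by (intro arg_cong2[where f="(+)"] arg_cong2[where f="(*)"] refl sum.cong)
       (simp_all add: sgi u1 u2)
  also have "\<dots> = had Q (apply_gate (G1 q Hm) \<psi>) w"
    unfolding had_def G1_apply uq Hm_def
    by (cases "w q") (simp_all add: sum.distrib sum_distrib_left sum_subtractf sum_negf algebra_simps)
  finally show "had Q (apply_gate (G1 q Hm) \<psi>) w = had (insert q Q) \<psi> w" by simp
qed

lemma had_layer:
  "distinct qs \<Longrightarrow> apply_layer (map (\<lambda>q. G1 q Hm) qs) \<psi> = had (set qs) \<psi>"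
proof (induction qs arbitrary: \<psi>)
  case Nil then show ?case by (simp add: apply_layer_Nil had_empty)
next
  case (Cons q qs)
  then show ?case by (simp add: apply_layer_Cons had_insert del: apply_gate.simps)
qed



fun qlist :: "gate \<Rightarrow> nat list" where
  "qlist (G1 q U) = [q]" | "qlist (CNOT c t) = [c, t]" | "qlist (FanOut y ts) = y # ts"
fun okg :: "gate \<Rightarrow> bool" where
  "okg (G1 q U) = unitary2 U" | "okg (CNOT c t) = True" | "okg (FanOut y ts) = (ts \<noteq> [])"

lemma set_qlist: "set (qlist g) = qubits g"
  by (cases g) auto

lemma distinct_concat_nth_disj:
  "distinct (concat xs) \<Longrightarrow> i < length xs \<Longrightarrow> j < length xs \<Longrightarrow> i \<noteq> j \<Longrightarrow>
   set (xs ! i) \<inter> set (xs ! j) = {}"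
proof (induction xs arbitrary: i j)
  case Nil then show ?case by simp
next
  case (Cons a xs)
  show ?case
  proof (cases i)
    case 0
    then obtain j' where "j = Suc j'" using Cons by (cases j) auto
    moreover have "xs ! j' \<in> set xs" using Cons.prems \<open>j = Suc j'\<close> by auto
    ultimately show ?thesis using Cons.prems(1) 0 by (simp add: set_concat) blast
  next
    case (Suc i')
    show ?thesis
    proof (cases j)
      case 0
      moreover have "xs ! i' \<in> set xs" using Cons.prems Suc by auto
      ultimately show ?thesis using Cons.prems(1) Suc by (simp add: set_concat) blast
    next
      case (Suc j') then show ?thesis using Cons \<open>i = Suc i'\<close> by auto
    qed
  qed
qed

lemma wf_layerI:
  assumes "\<forall>g\<in>set L. okg g" "distinct (concat (map qlist L))"
  shows "wf_layer L"
  unfolding wf_layer_def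
proof (intro conjI allI impI ballI)
  fix g assume g: "g \<in> set L"
  then have "distinct (qlist g)" using assms(2) by (auto simp: distinct_concat_iff)
  then show "wf_gate g" using assms(1) g by (cases g) auto
next
  fix i j assume "i < length L \<and> j < length L \<and> i \<noteq> j"
  then have "set (map qlist L ! i) \<inter> set (map qlist L ! j) = {}"
    by (intro distinct_concat_nth_disj[OF assms(2)]) auto
  then show "qubits (L ! i) \<inter> qubits (L ! j) = {}"
    using \<open>i < length L \<and> j < length L \<and> i \<noteq> j\<close> by (simp add: set_qlist)
qed

lemma distinct_concat_map:
  assumes "distinct xs" "\<And>x. x \<in> set xs \<Longrightarrow> distinct (f x)"
    "\<And>x y. x \<in> set xs \<Longrightarrow> y \<in> set xs \<Longrightarrow> x \<noteq> y \<Longrightarrow> set (f x) \<inter> set (f y) = {}"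
  shows "distinct (concat (map f xs))"
  using assms
proof (induction xs)
  case Nil then show ?case by simp
next
  case (Cons a xs)
  then show ?case by (fastforce simp: set_concat)
qed

definition flipby :: "nat set \<Rightarrow> (nat \<Rightarrow> nat) \<Rightarrow> basis \<Rightarrow> basis" where
  "flipby T src w = (\<lambda>j. if j \<in> T then w j \<noteq> w (src j) else w j)"

fun tlist :: "gate \<Rightarrow> nat list" where
  "tlist (FanOut y ts) = ts" | "tlist _ = []"
fun isfan :: "gate \<Rightarrow> bool" where
  "isfan (FanOut y ts) = True" | "isfan _ = False"
fun ctl :: "gate \<Rightarrow> nat" where
  "ctl (FanOut y ts) = y" | "ctl (G1 q U) = q" | "ctl (CNOT c t) = c"

lemma fanout_layer:
  assumes "\<forall>g\<in>set L. isfan g \<and> (\<forall>j\<in>set (tlist g). src j = ctl g) \<and>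
              ctl g \<notin> set (concat (map tlist L))"
    "distinct (concat (map tlist L))"
  shows "apply_layer L \<psi> = (\<lambda>w. \<psi> (flipby (set (concat (map tlist L))) src w))"
  using assms
proof (induction L arbitrary: \<psi>)
  case Nil then show ?case by (simp add: apply_layer_Nil flipby_def)
next
  case (Cons g L)
  obtain y ts where g: "g = FanOut y ts" using Cons.prems by (cases g) auto
  let ?T = "set (concat (map tlist L))"
  have IH: "apply_layer L \<phi> = (\<lambda>w. \<phi> (flipby ?T src w))" for \<phi>
    using Cons by auto
  have y: "y \<notin> ?T" "y \<notin> set ts" using Cons.prems g by auto
  have src: "\<forall>j\<in>set ts. src j = y" using Cons.prems g by auto
  have dis: "set ts \<inter> ?T = {}" using Cons.prems(2) g by auto
  show ?case
    unfolding apply_layer_Cons IH g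
  proof (rule ext)
    fix w
    let ?v = "flipby ?T src w"
    have "(\<lambda>i. if i \<in> set ts then ?v i \<noteq> ?v y else ?v i) =
          flipby (set (concat (map tlist (FanOut y ts # L)))) src w"
    proof
      fix j
      show "(if j \<in> set ts then ?v j \<noteq> ?v y else ?v j) =
          flipby (set (concat (map tlist (FanOut y ts # L)))) src w j"
      proof (cases "j \<in> set ts")
        case True
        then have "j \<notin> ?T" using dis by blast
        then show ?thesis using True y src by (simp add: flipby_def)
      next
        case False then show ?thesis by (simp add: flipby_def)
      qed
    qed
    then show "apply_gate (FanOut y ts) \<psi> (flipby ?T src w) =
          \<psi> (flipby (set (concat (map tlist (FanOut y ts # L)))) src w)"
      by (simp only: apply_gate.simps)
  qed
qed

lemma phase_layer:
  "apply_layer (map (\<lambda>(q, a). G1 q (pm a)) L) \<psi> =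
   (\<lambda>w. (\<Prod>(q, a)\<leftarrow>L. if w q then cis a else 1) * \<psi> w)"
proof (induction L arbitrary: \<psi>)
  case Nil then show ?case by (simp add: apply_layer_Nil)
next
  case (Cons qa L)
  obtain q a where qa: "qa = (q, a)" by fastforce
  have g: "apply_gate (G1 q (pm a)) \<psi> = (\<lambda>w. (if w q then cis a else 1) * \<psi> w)"
    by (rule ext) (simp add: G1_apply pm_def fun_upd_idem del: apply_gate.simps)
  show ?case by (simp add: qa apply_layer_Cons g Cons.IH mult_ac del: apply_gate.simps)
qed

lemma X_gate: "apply_gate (G1 q Xm) \<psi> = (\<lambda>w. \<psi> (w(q := \<not> w q)))"
  by (rule ext) (simp add: G1_apply Xm_def del: apply_gate.simps)



lemma sum_Pow_prod:
  fixes f :: "'a \<Rightarrow> 'c::comm_semiring_1"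
  assumes "finite A"
  shows "(\<Sum>B\<in>Pow A. \<Prod>a\<in>B. f a) = (\<Prod>a\<in>A. 1 + f a)"
  using prod_add[OF assms, of f "\<lambda>_. 1"] by (simp add: add.commute)

lemma walsh_pick:
  fixes F :: "nat set \<Rightarrow> complex"
  assumes fin: "finite Q" and B0: "B0 \<subseteq> Q"
    and pm1: "\<And>B' c. B' \<subseteq> Q \<Longrightarrow> c \<in> Q \<Longrightarrow> h B' c = 1 \<or> h B' c = -1"
    and uniq: "\<And>B'. B' \<subseteq> Q \<Longrightarrow> (\<forall>c\<in>Q. h B' c = 1) \<longleftrightarrow> B' = B0"
  shows "(\<Sum>B'\<in>Pow Q. (\<Sum>B\<in>Pow Q. \<Prod>c\<in>B. h B' c) * F B') = 2 ^ card Q * F B0"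
proof -
  have inner: "(\<Sum>B\<in>Pow Q. \<Prod>c\<in>B. h B' c) = (if B' = B0 then 2 ^ card Q else 0)"
    if B': "B' \<subseteq> Q" for B'
  proof -
    have "(\<Sum>B\<in>Pow Q. \<Prod>c\<in>B. h B' c) = (\<Prod>c\<in>Q. 1 + h B' c)"
      by (rule sum_Pow_prod[OF fin])
    also have "\<dots> = (if B' = B0 then 2 ^ card Q else 0)"
    proof (cases "B' = B0")
      case True
      then have "\<forall>c\<in>Q. h B' c = 1" using uniq[OF B'] by simp
      then show ?thesis using True by simp
    next
      case False
      then obtain c where c: "c \<in> Q" "h B' c \<noteq> 1" using uniq[OF B'] by blast
      then have "h B' c = -1" using pm1[OF B' c(1)] by simp
      then have "1 + h B' c = 0" by simp
      then have "(\<Prod>c\<in>Q. 1 + h B' c) = 0" using c fin by (metis prod_zero_iff)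
      then show ?thesis using False by simp
    qed
    finally show ?thesis .
  qed
  have "(\<Sum>B'\<in>Pow Q. (\<Sum>B\<in>Pow Q. \<Prod>c\<in>B. h B' c) * F B') =
        (\<Sum>B'\<in>Pow Q. (if B' = B0 then 2 ^ card Q * F B0 else 0))"
    by (rule sum.cong) (auto simp: inner)
  also have "\<dots> = 2 ^ card Q * F B0" using fin B0 by simp
  finally show ?thesis .
qed

lemma prod_sign_sym:
  assumes "finite B" "finite B'"
  shows "(\<Prod>a\<in>B'. if a \<in> B then (-1::complex) else 1) = (\<Prod>a\<in>B. if a \<in> B' then -1 else 1)"
proof -
  have "(\<Prod>a\<in>B'. if a \<in> B then (-1::complex) else 1) = (\<Prod>a\<in>{a\<in>B'. a \<in> B}. -1)"
    using assms(2) by (rule prod.inter_filter[symmetric])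
  also have "{a\<in>B'. a \<in> B} = {a\<in>B. a \<in> B'}" by auto
  also have "(\<Prod>a\<in>{a\<in>B. a \<in> B'}. (-1::complex)) = (\<Prod>a\<in>B. if a \<in> B' then -1 else 1)"
    using assms(1) by (rule prod.inter_filter)
  finally show ?thesis .
qed

lemma upd_upd: "upd Q B' (upd Q B w) = upd Q B' w"
  by (simp add: upd_def fun_eq_iff)

lemma sg_upd:
  assumes "B' \<subseteq> Q"
  shows "sg (upd Q B w) B' = (\<Prod>a\<in>B'. if a \<in> B then -1 else 1)"
  unfolding sg_def upd_def using assms by (intro prod.cong) auto

lemma r2_pow: "r2 ^ k * r2 ^ k * 2 ^ k = 1"
proof -
  have "r2 ^ k * r2 ^ k * 2 ^ k = (r2 * r2 * 2) ^ k" by (simp add: power_mult_distrib)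
  also have "r2 * r2 * 2 = 1" by (simp add: r2_sq)
  finally show ?thesis by simp
qed

lemma upd_self: "upd Q {a \<in> Q. w a} w = w"
  by (simp add: upd_def fun_eq_iff)

lemma had_had:
  assumes fin: "finite Q"
  shows "had Q (had Q \<psi>) = \<psi>"
proof
  fix w :: basis
  let ?h = "\<lambda>(B'::nat set) (c::nat). (if w c then -1 else 1) * (if c \<in> B' then -1 else (1::complex))"
  have eq: "sg w B * sg (upd Q B w) B' = (\<Prod>c\<in>B. ?h B' c)" if "B \<subseteq> Q" "B' \<subseteq> Q" for B B'
  proof -
    have "sg (upd Q B w) B' = (\<Prod>a\<in>B. if a \<in> B' then -1 else 1)"
      using that fin finite_subset[of B Q] finite_subset[of B' Q] by (simp add: sg_upd prod_sign_sym)
    then show ?thesis by (simp add: sg_def prod.distrib)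
  qed
  have "had Q (had Q \<psi>) w =
     r2 ^ card Q * r2 ^ card Q * (\<Sum>B\<in>Pow Q. \<Sum>B'\<in>Pow Q. sg w B * sg (upd Q B w) B' * \<psi> (upd Q B' w))"
    unfolding had_def upd_upd by (simp add: sum_distrib_left mult_ac)
  also have "(\<Sum>B\<in>Pow Q. \<Sum>B'\<in>Pow Q. sg w B * sg (upd Q B w) B' * \<psi> (upd Q B' w)) =
      (\<Sum>B'\<in>Pow Q. (\<Sum>B\<in>Pow Q. \<Prod>c\<in>B. ?h B' c) * \<psi> (upd Q B' w))"
    by (subst sum.swap) (auto intro!: sum.cong simp: eq sum_distrib_right)
  also have "\<dots> = 2 ^ card Q * \<psi> (upd Q {a \<in> Q. w a} w)"
    by (rule walsh_pick[OF fin]) auto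
  finally show "had Q (had Q \<psi>) w = \<psi> w"
    by (simp add: upd_self r2_pow mult.assoc[symmetric])
qed



lemma prod_fiber:
  assumes "finite X" "finite B"
  shows "(\<Prod>a\<in>X. if P a \<and> src a \<in> B then (-1::complex) else 1) =
         (\<Prod>c\<in>B. (-1) ^ card {a\<in>X. P a \<and> src a = c})"
proof -
  let ?S = "{a\<in>X. P a \<and> src a \<in> B}"
  have "(\<Prod>a\<in>X. if P a \<and> src a \<in> B then (-1::complex) else 1) = (\<Prod>a\<in>?S. -1)"
    using assms(1) by (rule prod.inter_filter[symmetric])
  also have "\<dots> = (-1) ^ card ?S" by simp
  also have "card ?S = (\<Sum>c\<in>B. card {a\<in>X. P a \<and> src a = c})"
  proof -
    have "(\<Sum>c\<in>B. \<Sum>x | x \<in> ?S \<and> src x = c. (1::nat)) = (\<Sum>x\<in>?S. 1)"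
      by (rule sum.group) (use assms in auto)
    moreover have "{x. x \<in> ?S \<and> src x = c} = {a\<in>X. P a \<and> src a = c}" if "c \<in> B" for c
      using that by auto
    ultimately show ?thesis by simp
  qed
  also have "(-1::complex) ^ (\<Sum>c\<in>B. card {a\<in>X. P a \<and> src a = c}) =
      (\<Prod>c\<in>B. (-1) ^ card {a\<in>X. P a \<and> src a = c})"
    by (rule power_sum)
  finally show ?thesis .
qed

definition colpar :: "nat set \<Rightarrow> (nat \<Rightarrow> nat) \<Rightarrow> basis \<Rightarrow> basis" where
  "colpar T src w = (\<lambda>j. w j \<noteq> odd (card {a\<in>T. src a = j \<and> w a}))"

lemma sign_xor: "(if p \<noteq> q then (-1::complex) else 1) = (if p then -1 else 1) * (if q then -1 else 1)"
  by auto

lemma neg1_pow_cases: "(-1::complex) ^ n = 1 \<or> (-1::complex) ^ n = -1"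
  by (cases "even n") auto

lemma had_flip_had:
  assumes fin: "finite Q" and TQ: "T \<subseteq> Q" and src: "\<And>j. j \<in> T \<Longrightarrow> src j \<in> Q \<and> src j \<notin> T"
  shows "had Q (\<lambda>w. had Q \<psi> (flipby T src w)) = (\<lambda>w. \<psi> (colpar T src w))"
proof
  fix w :: basis
  define N where "N = (\<lambda>(B'::nat set) c. card {a\<in>B'. a \<in> T \<and> src a = c})"
  let ?h = "\<lambda>(B'::nat set) (c::nat). (if w c then -1 else 1) * (if c \<in> B' then -1 else (1::complex))
             * (-1) ^ N B' c"
  define B0 where "B0 = {c\<in>Q. colpar T src w c}"
  have finT: "finite T" using fin TQ finite_subset by blast
  have upd_flip: "upd Q B' (flipby T src v) = upd Q B' v" for B' v
    using TQ by (auto simp: upd_def flipby_def fun_eq_iff)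
  have eq: "sg w B * sg (flipby T src (upd Q B w)) B' = (\<Prod>c\<in>B. ?h B' c)"
    if B: "B \<subseteq> Q" and B': "B' \<subseteq> Q" for B B'
  proof -
    have fB: "finite B" "finite B'" using B B' fin finite_subset by blast+
    have "sg (flipby T src (upd Q B w)) B' =
        (\<Prod>a\<in>B'. if (a \<in> B) \<noteq> (a \<in> T \<and> src a \<in> B) then -1 else 1)"
      unfolding sg_def using B' src by (intro prod.cong) (auto simp: flipby_def upd_def)
    also have "\<dots> = (\<Prod>a\<in>B'. if a \<in> B then -1 else 1) *
                    (\<Prod>a\<in>B'. if a \<in> T \<and> src a \<in> B then -1 else 1)"
      by (simp only: sign_xor prod.distrib)
    also have "\<dots> = (\<Prod>c\<in>B. if c \<in> B' then -1 else 1) * (\<Prod>c\<in>B. (-1) ^ N B' c)"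
      unfolding N_def using fB by (simp add: prod_sign_sym prod_fiber)
    finally show ?thesis by (simp add: sg_def prod.distrib mult.assoc)
  qed
  have NT: "N B' a = 0" if "a \<in> T" for B' a
  proof -
    have e: "{x\<in>B'. x \<in> T \<and> src x = a} = {}" using src that by blast
    show ?thesis by (simp only: N_def e card.empty)
  qed
  have cpT: "colpar T src w a = w a" if "a \<in> T" for a
  proof -
    have e: "{x\<in>T. src x = a \<and> w x} = {}" using src that by blast
    show ?thesis unfolding colpar_def e by simp
  qed
  have Nw: "N B' c = card {a\<in>T. src a = c \<and> w a}" if "\<forall>a\<in>T. (a \<in> B') = w a" for B' c
  proof -
    have e: "{x\<in>B'. x \<in> T \<and> src x = c} = {a\<in>T. src a = c \<and> w a}" using that by blast
    show ?thesis by (simp only: N_def e)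
  qed
  have hiff: "?h B' c = 1 \<longleftrightarrow> (c \<in> B') = (w c \<noteq> odd (N B' c))" for B' c
    by (cases "w c"; cases "c \<in> B'"; cases "even (N B' c)") auto
  have uniq: "(\<forall>c\<in>Q. ?h B' c = 1) \<longleftrightarrow> B' = B0" if B': "B' \<subseteq> Q" for B'
  proof
    assume H: "\<forall>c\<in>Q. ?h B' c = 1"
    then have H': "\<forall>c\<in>Q. (c \<in> B') = (w c \<noteq> odd (N B' c))" using hiff by blast
    have T1: "\<forall>a\<in>T. (a \<in> B') = w a" using H' TQ NT by auto
    show "B' = B0"
    proof
      show "B' \<subseteq> B0" using B' H' Nw[OF T1] by (auto simp: B0_def colpar_def)
      show "B0 \<subseteq> B'" using H' Nw[OF T1] by (auto simp: B0_def colpar_def)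
    qed
  next
    assume "B' = B0"
    then have T1: "\<forall>a\<in>T. (a \<in> B') = w a" using TQ cpT by (auto simp: B0_def)
    have "\<forall>c\<in>Q. (c \<in> B') = (w c \<noteq> odd (N B' c))"
      using \<open>B' = B0\<close> Nw[OF T1] by (auto simp: B0_def colpar_def)
    then show "\<forall>c\<in>Q. ?h B' c = 1" using hiff by blast
  qed
  have pm1: "?h B' c = 1 \<or> ?h B' c = -1" for B' c
    using neg1_pow_cases[of "N B' c"] by (cases "w c"; cases "c \<in> B'") auto
  have updB0: "upd Q B0 w = colpar T src w"
  proof
    fix j
    show "upd Q B0 w j = colpar T src w j"
    proof (cases "j \<in> Q")
      case True then show ?thesis by (simp add: upd_def B0_def)
    next
      case False
      have e: "{a\<in>T. src a = j \<and> w a} = {}" using src False by blast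
      show ?thesis using False unfolding upd_def colpar_def e by simp
    qed
  qed
  have "had Q (\<lambda>w. had Q \<psi> (flipby T src w)) w =
     r2 ^ card Q * r2 ^ card Q * (\<Sum>B\<in>Pow Q. \<Sum>B'\<in>Pow Q.
        sg w B * sg (flipby T src (upd Q B w)) B' * \<psi> (upd Q B' w))"
    unfolding had_def upd_flip upd_upd by (simp add: sum_distrib_left mult_ac)
  also have "(\<Sum>B\<in>Pow Q. \<Sum>B'\<in>Pow Q. sg w B * sg (flipby T src (upd Q B w)) B' * \<psi> (upd Q B' w)) =
      (\<Sum>B'\<in>Pow Q. (\<Sum>B\<in>Pow Q. \<Prod>c\<in>B. ?h B' c) * \<psi> (upd Q B' w))"
    by (subst sum.swap) (auto intro!: sum.cong simp: eq sum_distrib_right)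
  also have "\<dots> = 2 ^ card Q * \<psi> (upd Q B0 w)"
    by (rule walsh_pick[OF fin]) (use uniq pm1 in \<open>auto simp: B0_def\<close>)
  finally show "had Q (\<lambda>w. had Q \<psi> (flipby T src w)) w = \<psi> (colpar T src w)"
    by (simp add: updB0 r2_pow mult.assoc[symmetric])
qed



lemma had_phase_had:
  assumes fin: "finite E"
    and dB: "\<And>B. B \<subseteq> E \<Longrightarrow> d (upd E B w) = (\<Prod>a\<in>B. if f a then -1 else 1)"
  shows "had E (\<lambda>v. d v * had E \<phi> v) w = \<phi> (\<lambda>j. if j \<in> E \<and> f j then \<not> w j else w j)"
proof -
  let ?h = "\<lambda>(B'::nat set) (c::nat). (if w c then -1 else 1) * (if f c then -1 else 1) *
             (if c \<in> B' then -1 else (1::complex))"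
  define B0 where "B0 = {c\<in>E. w c \<noteq> f c}"
  have eq: "sg w B * d (upd E B w) * sg (upd E B w) B' = (\<Prod>c\<in>B. ?h B' c)"
    if B: "B \<subseteq> E" and B': "B' \<subseteq> E" for B B'
  proof -
    have "sg (upd E B w) B' = (\<Prod>a\<in>B. if a \<in> B' then -1 else 1)"
      using B B' fin finite_subset[of B E] finite_subset[of B' E] by (simp add: sg_upd prod_sign_sym)
    then show ?thesis using dB[OF B] by (simp add: sg_def prod.distrib)
  qed
  have uniq: "(\<forall>c\<in>E. ?h B' c = 1) \<longleftrightarrow> B' = B0" if "B' \<subseteq> E" for B'
  proof -
    have "(\<forall>c\<in>E. ?h B' c = 1) \<longleftrightarrow> (\<forall>c\<in>E. (c \<in> B') = (w c \<noteq> f c))"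
      by (intro ball_cong refl) (auto split: if_splits)
    also have "\<dots> \<longleftrightarrow> B' = B0" using that by (auto simp: B0_def)
    finally show ?thesis .
  qed
  have updB0: "upd E B0 w = (\<lambda>j. if j \<in> E \<and> f j then \<not> w j else w j)"
    by (auto simp: upd_def B0_def fun_eq_iff)
  have "had E (\<lambda>v. d v * had E \<phi> v) w =
     r2 ^ card E * r2 ^ card E * (\<Sum>B\<in>Pow E. \<Sum>B'\<in>Pow E.
        sg w B * d (upd E B w) * sg (upd E B w) B' * \<phi> (upd E B' w))"
    unfolding had_def upd_upd by (simp add: sum_distrib_left mult_ac)
  also have "(\<Sum>B\<in>Pow E. \<Sum>B'\<in>Pow E. sg w B * d (upd E B w) * sg (upd E B w) B' * \<phi> (upd E B' w)) =
      (\<Sum>B'\<in>Pow E. (\<Sum>B\<in>Pow E. \<Prod>c\<in>B. ?h B' c) * \<phi> (upd E B' w))"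
    by (subst sum.swap) (auto intro!: sum.cong simp: eq sum_distrib_right)
  also have "\<dots> = 2 ^ card E * \<phi> (upd E B0 w)"
    by (rule walsh_pick[OF fin]) (use uniq in \<open>auto simp: B0_def\<close>)
  finally show ?thesis
    by (simp add: updB0 r2_pow mult.assoc[symmetric])
qed

type_synonym terms = "(nat list \<times> real) list"

definition gS :: "terms \<Rightarrow> nat \<Rightarrow> nat list" where "gS T i = fst (T ! i)"
definition gA :: "terms \<Rightarrow> nat \<Rightarrow> real" where "gA T i = snd (T ! i)"
definition gidx :: "terms \<Rightarrow> (nat \<times> nat) set" where
  "gidx T = {(i, p). i < length T \<and> p \<le> length (gS T i)}"
definition gcopies :: "terms \<Rightarrow> (nat \<Rightarrow> nat \<Rightarrow> nat) \<Rightarrow> nat set" where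
  "gcopies T an = {an i (Suc p) |i p. i < length T \<and> p < length (gS T i)}"
definition ganc :: "terms \<Rightarrow> (nat \<Rightarrow> nat \<Rightarrow> nat) \<Rightarrow> nat set" where
  "ganc T an = (\<lambda>(i, p). an i p) ` gidx T"
definition ginv :: "terms \<Rightarrow> (nat \<Rightarrow> nat \<Rightarrow> nat) \<Rightarrow> nat \<Rightarrow> nat \<times> nat" where
  "ginv T an = inv_into (gidx T) (\<lambda>(i, p). an i p)"
definition gsrc1 :: "terms \<Rightarrow> (nat \<Rightarrow> nat \<Rightarrow> nat) \<Rightarrow> nat \<Rightarrow> nat" where
  "gsrc1 T an j = (case ginv T an j of (i, p) \<Rightarrow> gS T i ! (p - 1))"
definition gsrc3 :: "terms \<Rightarrow> (nat \<Rightarrow> nat \<Rightarrow> nat) \<Rightarrow> nat \<Rightarrow> nat" where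
  "gsrc3 T an j = (case ginv T an j of (i, p) \<Rightarrow> an i 0)"
definition gtg :: "terms \<Rightarrow> (nat \<Rightarrow> nat \<Rightarrow> nat) \<Rightarrow> nat \<Rightarrow> nat list" where
  "gtg T an q = concat (map (\<lambda>i. map (\<lambda>p. an i (Suc p))
      (filter (\<lambda>p. gS T i ! p = q) [0..<length (gS T i)])) [0..<length T])"
definition gsrcs :: "terms \<Rightarrow> (nat \<Rightarrow> nat \<Rightarrow> nat) \<Rightarrow> nat list" where
  "gsrcs T an = filter (\<lambda>q. gtg T an q \<noteq> []) (remdups (concat (map fst T)))"
definition gL1 :: "terms \<Rightarrow> (nat \<Rightarrow> nat \<Rightarrow> nat) \<Rightarrow> layer" where
  "gL1 T an = map (\<lambda>q. FanOut q (gtg T an q)) (gsrcs T an)"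
definition gancs :: "terms \<Rightarrow> (nat \<Rightarrow> nat \<Rightarrow> nat) \<Rightarrow> nat list" where
  "gancs T an = concat (map (\<lambda>i. map (an i) [0..<Suc (length (gS T i))]) [0..<length T])"
definition gLH :: "terms \<Rightarrow> (nat \<Rightarrow> nat \<Rightarrow> nat) \<Rightarrow> layer" where
  "gLH T an = map (\<lambda>q. G1 q Hm) (gancs T an)"
definition gL3 :: "terms \<Rightarrow> (nat \<Rightarrow> nat \<Rightarrow> nat) \<Rightarrow> layer" where
  "gL3 T an = map (\<lambda>i. FanOut (an i 0) (map (\<lambda>p. an i (Suc p)) [0..<length (gS T i)])) [0..<length T]"
definition gL5 :: "terms \<Rightarrow> (nat \<Rightarrow> nat \<Rightarrow> nat) \<Rightarrow> layer" where
  "gL5 T an = map (\<lambda>(q, a). G1 q (pm a)) (map (\<lambda>i. (an i 0, gA T i)) [0..<length T])"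
definition gadget :: "terms \<Rightarrow> (nat \<Rightarrow> nat \<Rightarrow> nat) \<Rightarrow> circuit" where
  "gadget T an = [gL1 T an, gLH T an, gL3 T an, gLH T an, gL5 T an, gLH T an, gL3 T an, gLH T an, gL1 T an]"
definition gok :: "terms \<Rightarrow> (nat \<Rightarrow> nat \<Rightarrow> nat) \<Rightarrow> bool" where
  "gok T an \<longleftrightarrow> (\<forall>i<length T. gS T i \<noteq> [] \<and> distinct (gS T i)) \<and>
     inj_on (\<lambda>(i, p). an i p) (gidx T) \<and>
     (\<forall>(i, p)\<in>gidx T. an i p \<notin> set (concat (map fst T)))"
definition gpar :: "terms \<Rightarrow> (nat \<Rightarrow> nat \<Rightarrow> nat) \<Rightarrow> basis \<Rightarrow> nat \<Rightarrow> bool" where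
  "gpar T an w i = colpar (gcopies T an) (gsrc3 T an) (flipby (gcopies T an) (gsrc1 T an) w) (an i 0)"

context
  fixes T :: terms and an :: "nat \<Rightarrow> nat \<Rightarrow> nat"
  assumes ok: "gok T an"
begin

lemma ok_inj: "i < length T \<Longrightarrow> p \<le> length (gS T i) \<Longrightarrow> i' < length T \<Longrightarrow> p' \<le> length (gS T i') \<Longrightarrow>
  an i p = an i' p' \<longleftrightarrow> i = i' \<and> p = p'"
proof -
  assume a: "i < length T" "p \<le> length (gS T i)" "i' < length T" "p' \<le> length (gS T i')"
  have inj: "inj_on (\<lambda>(i, p). an i p) (gidx T)" using ok by (simp add: gok_def)
  have "(i, p) \<in> gidx T" "(i', p') \<in> gidx T" using a by (auto simp: gidx_def)
  from inj_onD[OF inj _ this] show ?thesis by auto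
qed

lemma ok_nsrc: "i < length T \<Longrightarrow> p \<le> length (gS T i) \<Longrightarrow> an i p \<notin> set (concat (map fst T))"
proof -
  assume a: "i < length T" "p \<le> length (gS T i)"
  have "(i, p) \<in> gidx T" using a by (auto simp: gidx_def)
  then show ?thesis using ok unfolding gok_def by auto
qed

lemma ok_S: "i < length T \<Longrightarrow> gS T i \<noteq> [] \<and> distinct (gS T i)"
  using ok unfolding gok_def by auto

lemma S_src: "i < length T \<Longrightarrow> p < length (gS T i) \<Longrightarrow> gS T i ! p \<in> set (concat (map fst T))"
proof -
  assume a: "i < length T" "p < length (gS T i)"
  have "T ! i \<in> set T" using a by simp
  moreover have "gS T i ! p \<in> set (fst (T ! i))" using a by (simp add: gS_def)
  ultimately show ?thesis unfolding set_concat set_map by blast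
qed

lemma ginv_an: "i < length T \<Longrightarrow> p \<le> length (gS T i) \<Longrightarrow> ginv T an (an i p) = (i, p)"
proof -
  assume a: "i < length T" "p \<le> length (gS T i)"
  have inj: "inj_on (\<lambda>(i, p). an i p) (gidx T)" using ok by (simp add: gok_def)
  have "(i, p) \<in> gidx T" using a by (simp add: gidx_def)
  from inv_into_f_f[OF inj this] show ?thesis by (simp add: ginv_def)
qed

lemma src1_an: "i < length T \<Longrightarrow> p < length (gS T i) \<Longrightarrow> gsrc1 T an (an i (Suc p)) = gS T i ! p"
  by (simp add: gsrc1_def ginv_an)

lemma src3_an: "i < length T \<Longrightarrow> p \<le> length (gS T i) \<Longrightarrow> gsrc3 T an (an i p) = an i 0"
  by (simp add: gsrc3_def ginv_an)

lemma set_gtg: "set (gtg T an q) = {an i (Suc p) |i p. i < length T \<and> p < length (gS T i) \<and> gS T i ! p = q}"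
  unfolding gtg_def by (auto simp: set_concat) blast

lemma set_gancs: "set (gancs T an) = ganc T an"
proof
  show "set (gancs T an) \<subseteq> ganc T an"
  proof
    fix x assume "x \<in> set (gancs T an)"
    then obtain i p where "i < length T" "p < Suc (length (gS T i))" "x = an i p"
      unfolding gancs_def set_concat set_map by (auto simp del: upt_Suc)
    then show "x \<in> ganc T an" unfolding ganc_def gidx_def by (auto simp: image_iff less_Suc_eq_le)
  qed
  show "ganc T an \<subseteq> set (gancs T an)"
  proof
    fix x assume "x \<in> ganc T an"
    then obtain i p where ip: "i < length T" "p \<le> length (gS T i)" "x = an i p"
      unfolding ganc_def gidx_def by auto
    then have "x \<in> set (map (an i) [0..<Suc (length (gS T i))])" by (simp del: upt_Suc)
    then show "x \<in> set (gancs T an)" using ip unfolding gancs_def set_concat set_map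
      by (auto simp del: upt_Suc simp: image_iff less_Suc_eq_le)
  qed
qed

lemma copies_sub: "gcopies T an \<subseteq> ganc T an"
proof
  fix x assume "x \<in> gcopies T an"
  then obtain i p where "i < length T" "p < length (gS T i)" "x = an i (Suc p)"
    by (auto simp: gcopies_def)
  then have "(i, Suc p) \<in> gidx T" "x = (\<lambda>(i, p). an i p) (i, Suc p)" by (auto simp: gidx_def)
  then show "x \<in> ganc T an" unfolding ganc_def by blast
qed

end


lemma qlist_pm: "concat (map qlist (map (\<lambda>(q, a). G1 q (pm a)) ys)) = map fst ys"
  by (induction ys) auto

lemma qlist_G1s: "concat (map qlist (map (\<lambda>q. G1 q U) xs)) = xs"
  by (induction xs) auto

context
  fixes T :: terms and an :: "nat \<Rightarrow> nat \<Rightarrow> nat"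
  assumes ok: "gok T an"
begin

lemmas inj' = ok_inj[OF ok] and nsrc' = ok_nsrc[OF ok] and okS' = ok_S[OF ok]
  and src1' = src1_an[OF ok] and src3' = src3_an[OF ok] and setgtg = set_gtg[OF ok]
  and setgancs = set_gancs[OF ok] and Ssrc' = S_src[OF ok] and copsub = copies_sub[OF ok]

lemma an_injD: "an i p = an i' p' \<Longrightarrow> i < length T \<Longrightarrow> p \<le> length (gS T i) \<Longrightarrow> i' < length T \<Longrightarrow>
    p' \<le> length (gS T i') \<Longrightarrow> i = i' \<and> p = p'"
  using inj' by blast

lemma concat_tlist_L1: "set (concat (map tlist (gL1 T an))) = gcopies T an"
proof -
  have "set (concat (map tlist (gL1 T an))) = (\<Union>q\<in>set (gsrcs T an). set (gtg T an q))"
    by (auto simp: gL1_def)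
  also have "\<dots> = gcopies T an"
  proof
    show "(\<Union>q\<in>set (gsrcs T an). set (gtg T an q)) \<subseteq> gcopies T an"
      unfolding setgtg gcopies_def by blast
    show "gcopies T an \<subseteq> (\<Union>q\<in>set (gsrcs T an). set (gtg T an q))"
    proof
      fix x assume "x \<in> gcopies T an"
      then obtain i p where x: "x = an i (Suc p)" "i < length T" "p < length (gS T i)"
        by (auto simp: gcopies_def)
      let ?q = "gS T i ! p"
      have xin: "x \<in> set (gtg T an ?q)" using x unfolding setgtg by blast
      then have "?q \<in> set (gsrcs T an)" using Ssrc'[OF x(2,3)] by (auto simp: gsrcs_def)
      then show "x \<in> (\<Union>q\<in>set (gsrcs T an). set (gtg T an q))" using xin by blast
    qed
  qed
  finally show ?thesis .
qed

lemma concat_tlist_L3: "set (concat (map tlist (gL3 T an))) = gcopies T an"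
  unfolding gL3_def gcopies_def by (auto; blast)

lemma distinct_gtg: "distinct (gtg T an q)"
  unfolding gtg_def
proof (rule distinct_concat_map)
  fix i assume i: "i \<in> set [0..<length T]"
  show "distinct (map (\<lambda>p. an i (Suc p)) (filter (\<lambda>p. gS T i ! p = q) [0..<length (gS T i)]))"
    unfolding distinct_map
  proof
    show "inj_on (\<lambda>p. an i (Suc p)) (set (filter (\<lambda>p. gS T i ! p = q) [0..<length (gS T i)]))"
      using i by (auto intro!: inj_onI dest: an_injD)
  qed simp
next
  fix i j assume "i \<in> set [0..<length T]" "j \<in> set [0..<length T]" "i \<noteq> j"
  then show "set (map (\<lambda>p. an i (Suc p)) (filter (\<lambda>p. gS T i ! p = q) [0..<length (gS T i)])) \<inter>
             set (map (\<lambda>p. an j (Suc p)) (filter (\<lambda>p. gS T j ! p = q) [0..<length (gS T j)])) = {}"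
    by (auto dest: an_injD)
qed simp

lemma src_not_copy: "q \<in> set (concat (map fst T)) \<Longrightarrow> q \<notin> gcopies T an"
  unfolding gcopies_def using nsrc' by fastforce

lemma distinct_L1: "distinct (concat (map qlist (gL1 T an)))"
  unfolding gL1_def map_map o_def qlist.simps
proof (rule distinct_concat_map)
  show "distinct (gsrcs T an)" by (simp add: gsrcs_def)
next
  fix q assume q: "q \<in> set (gsrcs T an)"
  then have "q \<in> set (concat (map fst T))" by (simp add: gsrcs_def)
  then have "q \<notin> set (gtg T an q)" using src_not_copy unfolding setgtg gcopies_def by blast
  then show "distinct (q # gtg T an q)" by (simp add: distinct_gtg)
next
  fix q q' assume q: "q \<in> set (gsrcs T an)" "q' \<in> set (gsrcs T an)" "q \<noteq> q'"
  then have src: "q \<in> set (concat (map fst T))" "q' \<in> set (concat (map fst T))"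
    by (simp_all add: gsrcs_def)
  have "q \<notin> set (gtg T an q')" "q' \<notin> set (gtg T an q)"
    using src src_not_copy unfolding setgtg gcopies_def by blast+
  moreover have "set (gtg T an q) \<inter> set (gtg T an q') = {}"
    using q(3) unfolding setgtg by (auto dest: an_injD)
  ultimately show "set (q # gtg T an q) \<inter> set (q' # gtg T an q') = {}" using q(3) by auto
qed

lemma distinct_gancs: "distinct (gancs T an)"
  unfolding gancs_def
proof (rule distinct_concat_map)
  fix i assume i: "i \<in> set [0..<length T]"
  show "distinct (map (an i) [0..<Suc (length (gS T i))])"
    unfolding distinct_map
  proof
    show "inj_on (an i) (set [0..<Suc (length (gS T i))])"
      using i by (auto intro!: inj_onI dest: an_injD simp del: upt_Suc)
  qed simp
next
  fix i j assume "i \<in> set [0..<length T]" "j \<in> set [0..<length T]" "i \<noteq> j"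
  then show "set (map (an i) [0..<Suc (length (gS T i))]) \<inter> set (map (an j) [0..<Suc (length (gS T j))]) = {}"
    by (auto dest: an_injD simp del: upt_Suc)
qed simp

lemma concat_qlist_L3: "concat (map qlist (gL3 T an)) = gancs T an"
proof -
  have "\<And>l. an i 0 # map (\<lambda>p. an i (Suc p)) [0..<l] = map (an i) [0..<Suc l]" for i
    by (simp add: upt_conv_Cons map_Suc_upt[symmetric] del: upt_Suc)
  then show ?thesis unfolding gL3_def gancs_def map_map o_def qlist.simps by simp
qed

lemma wf_gadget: "wf_circuit (gadget T an)"
proof -
  have L1: "wf_layer (gL1 T an)"
  proof (rule wf_layerI)
    show "\<forall>g\<in>set (gL1 T an). okg g" by (auto simp: gL1_def gsrcs_def)
    show "distinct (concat (map qlist (gL1 T an)))" by (rule distinct_L1)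
  qed
  have LH: "wf_layer (gLH T an)"
  proof (rule wf_layerI)
    show "\<forall>g\<in>set (gLH T an). okg g" by (auto simp: gLH_def unitary_Hm)
    have "concat (map qlist (gLH T an)) = gancs T an"
      unfolding gLH_def by (rule qlist_G1s)
    then show "distinct (concat (map qlist (gLH T an)))" by (simp add: distinct_gancs)
  qed
  have L3: "wf_layer (gL3 T an)"
  proof (rule wf_layerI)
    show "\<forall>g\<in>set (gL3 T an). okg g" by (auto simp: gL3_def okS')
    show "distinct (concat (map qlist (gL3 T an)))" by (simp only: concat_qlist_L3 distinct_gancs)
  qed
  have L5: "wf_layer (gL5 T an)"
  proof (rule wf_layerI)
    show "\<forall>g\<in>set (gL5 T an). okg g" by (auto simp: gL5_def unitary_pm)
    have "concat (map qlist (gL5 T an)) = map (\<lambda>i. an i 0) [0..<length T]"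
      unfolding gL5_def qlist_pm by simp
    moreover have "distinct (map (\<lambda>i. an i 0) [0..<length T])"
      unfolding distinct_map by (auto intro!: inj_onI dest: an_injD)
    ultimately show "distinct (concat (map qlist (gL5 T an)))" by simp
  qed
  show ?thesis using L1 LH L3 L5 by (simp add: wf_circuit_def gadget_def)
qed

end


lemma colpar_invol:
  assumes "\<And>j. j \<in> C \<Longrightarrow> src j \<notin> C"
  shows "colpar C src (colpar C src w) = w"
proof
  fix j
  have cC: "colpar C src w a = w a" if "a \<in> C" for a
  proof -
    have e: "{x\<in>C. src x = a \<and> w x} = {}" using assms that by blast
    show ?thesis unfolding colpar_def e by simp
  qed
  have e: "{a\<in>C. src a = j \<and> colpar C src w a} = {a\<in>C. src a = j \<and> w a}"
    using cC by auto
  show "colpar C src (colpar C src w) j = w j"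
    unfolding colpar_def[of C src "colpar C src w"] e by (cases "w j") (simp_all add: colpar_def)
qed

lemma flipby_invol:
  assumes "\<And>j. j \<in> C \<Longrightarrow> src j \<notin> C"
  shows "flipby C src (flipby C src w) = w"
  using assms by (auto simp: flipby_def fun_eq_iff)

lemma card_nth_filter:
  assumes "distinct xs"
  shows "card {p. p < length xs \<and> P (xs ! p)} = card {q \<in> set xs. P q}"
proof -
  have "inj_on (nth xs) {p. p < length xs \<and> P (xs ! p)}"
    using assms by (auto intro!: inj_onI simp: nth_eq_iff_index_eq)
  moreover have "nth xs ` {p. p < length xs \<and> P (xs ! p)} = {q \<in> set xs. P q}"
    by (auto simp: in_set_conv_nth)
  ultimately show ?thesis by (metis card_image)
qed

context
  fixes T :: terms and an :: "nat \<Rightarrow> nat \<Rightarrow> nat"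
  assumes ok: "gok T an"
begin

lemmas inj'' = ok_inj[OF ok] and nsrc'' = ok_nsrc[OF ok] and okS'' = ok_S[OF ok]
  and src1'' = src1_an[OF ok] and src3'' = src3_an[OF ok] and setgtg' = set_gtg[OF ok]
  and setgancs' = set_gancs[OF ok] and Ssrc'' = S_src[OF ok] and copsub' = copies_sub[OF ok]
  and an_injD' = an_injD[OF ok] and src_not_copy' = src_not_copy[OF ok]
  and distinct_gtg' = distinct_gtg[OF ok] and distinct_gancs' = distinct_gancs[OF ok]
  and cL1 = concat_tlist_L1[OF ok] and cL3 = concat_tlist_L3[OF ok]

lemma gtg_disj: "q \<noteq> q' \<Longrightarrow> set (gtg T an q) \<inter> set (gtg T an q') = {}"
  unfolding setgtg' by (auto dest: an_injD')

lemma src1_copy: "j \<in> gcopies T an \<Longrightarrow> gsrc1 T an j \<notin> gcopies T an"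
proof -
  assume "j \<in> gcopies T an"
  then obtain i p where "i < length T" "p < length (gS T i)" "j = an i (Suc p)"
    by (auto simp: gcopies_def)
  then show ?thesis using src1'' Ssrc'' src_not_copy' by auto
qed

lemma src3_copy: "j \<in> gcopies T an \<Longrightarrow> gsrc3 T an j \<in> ganc T an \<and> gsrc3 T an j \<notin> gcopies T an"
proof -
  assume "j \<in> gcopies T an"
  then obtain i p where ip: "i < length T" "p < length (gS T i)" "j = an i (Suc p)"
    by (auto simp: gcopies_def)
  then have s: "gsrc3 T an j = an i 0" using src3'' by simp
  have "an i 0 \<in> ganc T an" using ip by (force simp: ganc_def gidx_def)
  moreover have "an i 0 \<notin> gcopies T an" using ip by (auto simp: gcopies_def dest: an_injD')
  ultimately show ?thesis using s by simp
qed

lemma layer1: "apply_layer (gL1 T an) \<phi> = (\<lambda>w. \<phi> (flipby (gcopies T an) (gsrc1 T an) w))"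
proof -
  have d: "distinct (concat (map tlist (gL1 T an)))"
    unfolding gL1_def map_map o_def tlist.simps
    by (rule distinct_concat_map) (auto simp: gsrcs_def distinct_gtg' dest: gtg_disj)
  have c: "\<forall>g\<in>set (gL1 T an). isfan g \<and> (\<forall>j\<in>set (tlist g). gsrc1 T an j = ctl g) \<and>
              ctl g \<notin> set (concat (map tlist (gL1 T an)))"
  proof
    fix g assume "g \<in> set (gL1 T an)"
    then obtain q where q: "q \<in> set (gsrcs T an)" "g = FanOut q (gtg T an q)" by (auto simp: gL1_def)
    then have qs: "q \<in> set (concat (map fst T))" by (simp add: gsrcs_def)
    have "\<forall>j\<in>set (gtg T an q). gsrc1 T an j = q" unfolding setgtg' using src1'' by auto
    moreover have "q \<notin> set (concat (map tlist (gL1 T an)))" unfolding cL1 using src_not_copy' qs by blast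
    ultimately show "isfan g \<and> (\<forall>j\<in>set (tlist g). gsrc1 T an j = ctl g) \<and>
              ctl g \<notin> set (concat (map tlist (gL1 T an)))" using q by simp
  qed
  show ?thesis using fanout_layer[OF c d] unfolding cL1 .
qed

lemma layer3: "apply_layer (gL3 T an) \<phi> = (\<lambda>w. \<phi> (flipby (gcopies T an) (gsrc3 T an) w))"
proof -
  have d: "distinct (concat (map tlist (gL3 T an)))"
    unfolding gL3_def map_map o_def tlist.simps
  proof (rule distinct_concat_map)
    fix i assume i: "i \<in> set [0..<length T]"
    show "distinct (map (\<lambda>p. an i (Suc p)) [0..<length (gS T i)])"
      unfolding distinct_map using i by (auto intro!: inj_onI dest: an_injD')
  qed (auto dest: an_injD')
  have c: "\<forall>g\<in>set (gL3 T an). isfan g \<and> (\<forall>j\<in>set (tlist g). gsrc3 T an j = ctl g) \<and>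
              ctl g \<notin> set (concat (map tlist (gL3 T an)))"
  proof
    fix g assume "g \<in> set (gL3 T an)"
    then obtain i where i: "i < length T" "g = FanOut (an i 0) (map (\<lambda>p. an i (Suc p)) [0..<length (gS T i)])"
      by (auto simp: gL3_def)
    have "an i 0 \<notin> gcopies T an" using i by (auto simp: gcopies_def dest: an_injD')
    then show "isfan g \<and> (\<forall>j\<in>set (tlist g). gsrc3 T an j = ctl g) \<and>
              ctl g \<notin> set (concat (map tlist (gL3 T an)))" using i src3'' unfolding cL3 by auto
  qed
  show ?thesis using fanout_layer[OF c d] unfolding cL3 .
qed

lemma layerH: "apply_layer (gLH T an) \<phi> = had (ganc T an) \<phi>"
  unfolding gLH_def using had_layer[OF distinct_gancs'] setgancs' by simp

lemma layer5: "apply_layer (gL5 T an) \<phi> =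
   (\<lambda>w. (\<Prod>i\<leftarrow>[0..<length T]. if w (an i 0) then cis (gA T i) else 1) * \<phi> w)"
  unfolding gL5_def phase_layer by (simp add: o_def)

lemma finite_ganc: "finite (ganc T an)"
proof -
  have "gidx T = (SIGMA i:{..<length T}. {..length (gS T i)})" by (auto simp: gidx_def)
  then have "finite (gidx T)" by auto
  then show ?thesis by (simp add: ganc_def)
qed

lemma HFH3: "had (ganc T an) (\<lambda>w. had (ganc T an) \<phi> (flipby (gcopies T an) (gsrc3 T an) w)) =
    (\<lambda>w. \<phi> (colpar (gcopies T an) (gsrc3 T an) w))"
  by (rule had_flip_had[OF finite_ganc copsub']) (use src3_copy in blast)

lemma run_gadget:
  "run (gadget T an) \<psi> = (\<lambda>w. (\<Prod>i\<leftarrow>[0..<length T]. if gpar T an w i then cis (gA T i) else 1) * \<psi> w)"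
proof -
  let ?f1 = "flipby (gcopies T an) (gsrc1 T an)"
  let ?c3 = "colpar (gcopies T an) (gsrc3 T an)"
  let ?ph = "\<lambda>w. (\<Prod>i\<leftarrow>[0..<length T]. if w (an i 0) then cis (gA T i) else 1)"
  have i1: "?f1 (?f1 w) = w" for w by (rule flipby_invol) (use src1_copy in blast)
  have i3: "?c3 (?c3 w) = w" for w by (rule colpar_invol) (use src3_copy in blast)
  have "run (gadget T an) \<psi> = apply_layer (gL1 T an) (apply_layer (gLH T an) (apply_layer (gL3 T an)
      (apply_layer (gLH T an) (apply_layer (gL5 T an) (apply_layer (gLH T an) (apply_layer (gL3 T an)
      (apply_layer (gLH T an) (apply_layer (gL1 T an) \<psi>))))))))"
    by (simp add: run_def gadget_def)
  also have "\<dots> = (\<lambda>w. ?ph (?c3 (?f1 w)) * \<psi> (?f1 (?c3 (?c3 (?f1 w)))))"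
    unfolding layer1 layer3 layerH layer5 HFH3 by simp
  also have "\<dots> = (\<lambda>w. ?ph (?c3 (?f1 w)) * \<psi> w)" by (simp add: i1 i3)
  finally show ?thesis by (simp add: gpar_def)
qed

lemma gpar_zero:
  assumes z: "\<forall>j\<in>ganc T an. \<not> w j" and i: "i < length T"
  shows "gpar T an w i = odd (card {q \<in> set (gS T i). w q})"
proof -
  let ?v = "flipby (gcopies T an) (gsrc1 T an) w"
  have a0: "an i 0 \<in> ganc T an" using i by (force simp: ganc_def gidx_def)
  have a0c: "an i 0 \<notin> gcopies T an" using i by (auto simp: gcopies_def dest: an_injD')
  have v0: "?v (an i 0) = False" using z a0 a0c by (simp add: flipby_def)
  have "{a \<in> gcopies T an. gsrc3 T an a = an i 0 \<and> ?v a} =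
        (\<lambda>p. an i (Suc p)) ` {p. p < length (gS T i) \<and> w (gS T i ! p)}"
  proof
    show "{a \<in> gcopies T an. gsrc3 T an a = an i 0 \<and> ?v a} \<subseteq>
        (\<lambda>p. an i (Suc p)) ` {p. p < length (gS T i) \<and> w (gS T i ! p)}"
    proof
      fix a assume a: "a \<in> {a \<in> gcopies T an. gsrc3 T an a = an i 0 \<and> ?v a}"
      then obtain i' p where ip: "i' < length T" "p < length (gS T i')" "a = an i' (Suc p)"
        by (auto simp: gcopies_def)
      then have "an i' 0 = an i 0" using a src3'' by auto
      then have ii: "i' = i" using an_injD'[of i' 0 i 0] ip i by auto
      have "a \<in> ganc T an" using a copsub' by blast
      then have "\<not> w a" using z by blast
      then have "w (gS T i ! p)" using a ip ii src1'' by (auto simp: flipby_def)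
      then show "a \<in> (\<lambda>p. an i (Suc p)) ` {p. p < length (gS T i) \<and> w (gS T i ! p)}"
        using ip ii by auto
    qed
    show "(\<lambda>p. an i (Suc p)) ` {p. p < length (gS T i) \<and> w (gS T i ! p)} \<subseteq>
        {a \<in> gcopies T an. gsrc3 T an a = an i 0 \<and> ?v a}"
    proof
      fix a assume "a \<in> (\<lambda>p. an i (Suc p)) ` {p. p < length (gS T i) \<and> w (gS T i ! p)}"
      then obtain p where p: "p < length (gS T i)" "w (gS T i ! p)" "a = an i (Suc p)" by auto
      have ac: "a \<in> gcopies T an" using p i by (auto simp: gcopies_def)
      then have "\<not> w a" using z copsub' by blast
      then show "a \<in> {a \<in> gcopies T an. gsrc3 T an a = an i 0 \<and> ?v a}"
        using ac p i src1'' src3'' by (auto simp: flipby_def)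
    qed
  qed
  moreover have "card ((\<lambda>p. an i (Suc p)) ` {p. p < length (gS T i) \<and> w (gS T i ! p)}) =
       card {p. p < length (gS T i) \<and> w (gS T i ! p)}"
    by (rule card_image) (use i in \<open>auto intro!: inj_onI dest: an_injD'\<close>)
  moreover have "card {p. p < length (gS T i) \<and> w (gS T i ! p)} = card {q \<in> set (gS T i). w q}"
    using okS''[OF i] by (simp add: card_nth_filter)
  ultimately show ?thesis using v0 by (simp add: gpar_def colpar_def)
qed

end


lemma run_append: "run (C1 @ C2) \<psi> = run C2 (run C1 \<psi>)"
  by (simp add: run_def)
lemma run_single: "run [L] \<psi> = apply_layer L \<psi>"
  by (simp add: run_def)
lemma run_Nil: "run [] \<psi> = \<psi>"
  by (simp add: run_def)

definition tphase :: "terms \<Rightarrow> basis \<Rightarrow> real" where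
  "tphase T w = sum_list (map (\<lambda>(S, a). if odd (card {q \<in> set S. w q}) then a else 0) T)"

lemma prod_cis_list:
  "prod_list (map (\<lambda>(S, a). if P S then cis a else 1) T) =
   cis (sum_list (map (\<lambda>(S, a). if P S then a else 0) T))"
  by (induction T) (auto simp: cis_mult)

lemma gk_cis:
  assumes ok: "gok T an" and z: "\<forall>j\<in>ganc T an. \<not> w j"
  shows "(\<Prod>i\<leftarrow>[0..<length T]. if gpar T an w i then cis (gA T i) else 1) = cis (tphase T w)"
proof -
  let ?g = "\<lambda>(S, a). if odd (card {q \<in> set S. w q}) then cis a else (1::complex)"
  have "map (\<lambda>i. if gpar T an w i then cis (gA T i) else 1) [0..<length T] =
        map (\<lambda>i. ?g (T ! i)) [0..<length T]"
    by (rule map_cong) (auto simp: gpar_zero[OF ok z] gS_def gA_def split: prod.splits)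
  also have "\<dots> = map ?g T"
    by (rule nth_equalityI) auto
  finally show ?thesis unfolding tphase_def by (simp add: prod_cis_list)
qed

lemma run_gadget_zero:
  assumes ok: "gok T an" and z: "\<forall>j\<in>ganc T an. \<not> w j"
  shows "run (gadget T an) \<psi> w = cis (tphase T w) * \<psi> w"
  using run_gadget[OF ok] gk_cis[OF ok z] by simp

definition neg_terms :: "terms \<Rightarrow> terms" where
  "neg_terms T = map (\<lambda>(S, a). (S, - a)) T"

lemma nth_beyond: "length xs \<le> i \<Longrightarrow> xs ! i = [] ! (i - length xs)"
  by (induction xs arbitrary: i) (auto simp: nth_Cons split: nat.split)

lemma gS_neg: "gS (neg_terms T) = gS T"
proof
  fix i
  show "gS (neg_terms T) i = gS T i"
  proof (cases "i < length T")
    case True then show ?thesis by (auto simp: gS_def neg_terms_def split: prod.splits)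
  next
    case False
    then have "neg_terms T ! i = T ! i"
      using nth_beyond[of T i] nth_beyond[of "neg_terms T" i] by (simp add: neg_terms_def)
    then show ?thesis by (simp add: gS_def)
  qed
qed
lemma gA_neg: "i < length T \<Longrightarrow> gA (neg_terms T) i = - gA T i"
  by (auto simp: gA_def neg_terms_def split: prod.splits)
lemma len_neg: "length (neg_terms T) = length T"
  by (simp add: neg_terms_def)

lemma gpar_neg: "gpar (neg_terms T) an = gpar T an"
proof -
  have "gidx (neg_terms T) = gidx T" by (simp add: gidx_def gS_neg len_neg)
  then have gi: "ginv (neg_terms T) an = ginv T an" by (simp add: ginv_def)
  have a: "gcopies (neg_terms T) an = gcopies T an" by (simp add: gcopies_def gS_neg len_neg)
  have b: "gsrc1 (neg_terms T) an = gsrc1 T an" by (rule ext) (simp add: gsrc1_def gi gS_neg)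
  have c: "gsrc3 (neg_terms T) an = gsrc3 T an" by (rule ext) (simp add: gsrc3_def gi)
  show ?thesis unfolding gpar_def a b c ..
qed

lemma gok_neg: "gok T an \<Longrightarrow> gok (neg_terms T) an"
proof -
  assume "gok T an"
  moreover have "gidx (neg_terms T) = gidx T" by (simp add: gidx_def gS_neg len_neg)
  moreover have "map fst (neg_terms T) = map fst T" by (auto simp: neg_terms_def)
  ultimately show ?thesis by (simp add: gok_def gS_neg len_neg)
qed


lemma prod_list_map_mult:
  "prod_list (map f xs) * prod_list (map g xs) = prod_list (map (\<lambda>x. f x * g x) xs :: complex list)"
  by (induction xs) (simp_all add: mult_ac)

lemma gadget_neg_inv:
  assumes ok: "gok T an"
  shows "run (gadget (neg_terms T) an) (run (gadget T an) \<psi>) = \<psi>"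
proof
  fix w
  have e1: "(\<Prod>i\<leftarrow>[0..<length T]. if gpar T an w i then cis (- gA T i) else 1) *
        (\<Prod>i\<leftarrow>[0..<length T]. if gpar T an w i then cis (gA T i) else 1) = 1"
  proof -
    have "(\<lambda>i. (if gpar T an w i then cis (- gA T i) else 1) * (if gpar T an w i then cis (gA T i) else 1))
        = (\<lambda>_. 1)" by (auto simp: cis_mult fun_eq_iff)
    then show ?thesis unfolding prod_list_map_mult by (simp add: map_replicate_const)
  qed
  have m: "map (\<lambda>i. if gpar (neg_terms T) an w i then cis (gA (neg_terms T) i) else 1) [0..<length T] =
     map (\<lambda>i. if gpar T an w i then cis (- gA T i) else 1) [0..<length T]"
    by (rule map_cong) (auto simp: gpar_neg gA_neg)
  show "run (gadget (neg_terms T) an) (run (gadget T an) \<psi>) w = \<psi> w"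
    unfolding run_gadget[OF gok_neg[OF ok]] run_gadget[OF ok] len_neg
    by (simp only: m mult.assoc[symmetric] e1) simp
qed



lemma exists_odd_decomp:
  fixes d :: int
  assumes "d \<noteq> 0"
  shows "\<exists>v r. d = 2 ^ v * r \<and> odd r"
  using assms
proof (induction "nat \<bar>d\<bar>" arbitrary: d rule: less_induct)
  case less
  show ?case
  proof (cases "odd d")
    case True then show ?thesis by (intro exI[of _ 0] exI[of _ d]) simp
  next
    case False
    then obtain d' where d': "d = 2 * d'" by blast
    then have "d' \<noteq> 0" "nat \<bar>d'\<bar> < nat \<bar>d\<bar>" using less.prems by auto
    then obtain v r where "d' = 2 ^ v * r" "odd r" using less.hyps by blast
    then show ?thesis using d' by (intro exI[of _ "Suc v"] exI[of _ r]) simp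
  qed
qed

lemma cis_odd_pi:
  fixes r :: int
  assumes "odd r"
  shows "cis (pi * of_int r) = -1"
proof -
  obtain q where q: "r = 2 * q + 1" using assms by (metis oddE)
  have e: "pi * real_of_int r = 2 * pi * real_of_int q + pi" by (simp add: q algebra_simps)
  have "cis (pi * of_int r) = cis (2 * pi * of_int q) * cis pi"
    by (simp only: e cis_mult)
  also have "\<dots> = -1" by simp
  finally show ?thesis .
qed

definition th :: "nat \<Rightarrow> nat \<Rightarrow> real" where
  "th m l = 2 * pi * 2 ^ l / 2 ^ m"

lemma exists_half_turn:
  fixes d :: int
  assumes "d \<noteq> 0" "\<bar>d\<bar> < 2 ^ m"
  shows "\<exists>l<m. cis (th m l * of_int d) = -1"
proof -
  obtain v r where vo: "d = 2 ^ v * r" "odd r" using exists_odd_decomp[OF assms(1)] by blast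
  have "r \<noteq> 0" using vo by auto
  then have "(2::int) ^ v \<le> \<bar>d\<bar>" using vo by (simp add: abs_mult)
  then have "(2::int) ^ v < 2 ^ m" using assms(2) by linarith
  then have vm: "v < m" by (simp add: power_strict_increasing_iff)
  define l where "l = m - 1 - v"
  have lv: "l + v + 1 = m" using vm by (simp add: l_def)
  have "th m l * of_int d = pi * of_int r * (2 * 2 ^ l * 2 ^ v / 2 ^ m)"
    by (simp add: th_def vo algebra_simps)
  also have "(2::real) * 2 ^ l * 2 ^ v = 2 ^ m" by (simp flip: lv add: power_add algebra_simps)
  finally have "th m l * of_int d = pi * of_int r" by simp
  then show ?thesis using cis_odd_pi[OF vo(2)] vm by (intro exI[of _ l]) (auto simp: l_def)
qed

definition qa :: "nat \<Rightarrow> nat \<Rightarrow> nat \<Rightarrow> nat \<Rightarrow> nat" where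
  "qa n tag a b = n + 1 + prod_encode (tag, prod_encode (a, b))"

lemma qa_eq[simp]: "qa n tag a b = qa n tag' a' b' \<longleftrightarrow> tag = tag' \<and> a = a' \<and> b = b'"
  by (simp add: qa_def)
lemma qa_gt[simp]: "n < qa n tag a b" by (simp add: qa_def)
lemma qa_not_less[simp]: "\<not> qa n tag a b < n" "\<not> qa n tag a b \<le> n" by (simp_all add: qa_def)
lemma qa_neq[simp]: "qa n tag a b \<noteq> n" "j < n \<Longrightarrow> qa n tag a b \<noteq> j" "j < n \<Longrightarrow> j \<noteq> qa n tag a b"
  "qa n tag a b = n \<longleftrightarrow> False" "n = qa n tag a b \<longleftrightarrow> False"
  by (simp_all add: qa_def)

definition yq :: "nat \<Rightarrow> nat \<Rightarrow> nat \<Rightarrow> nat" where "yq n k l = qa n 0 k l"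
definition eq :: "nat \<Rightarrow> nat \<Rightarrow> nat" where "eq n k = qa n 1 k 0"
definition ak :: "nat \<Rightarrow> nat \<Rightarrow> nat \<Rightarrow> nat" where "ak n = qa n 2"
definition ad :: "nat \<Rightarrow> nat \<Rightarrow> nat \<Rightarrow> nat" where "ad n = qa n 3"

lemma yq_eq_iff[simp]: "yq n k l = yq n k' l' \<longleftrightarrow> k = k' \<and> l = l'" by (simp add: yq_def)
lemma eq_eq_iff[simp]: "eq n k = eq n k' \<longleftrightarrow> k = k'" by (simp add: eq_def)
lemma yq_neq_eq[simp]: "yq n k l \<noteq> eq n k'" "eq n k' \<noteq> yq n k l" by (simp_all add: yq_def eq_def)
lemma yq_gt[simp]: "n < yq n k l" "\<not> yq n k l < n" "yq n k l \<noteq> n" "n \<noteq> yq n k l" by (simp_all add: yq_def)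
lemma eq_gt[simp]: "n < eq n k" "\<not> eq n k < n" "eq n k \<noteq> n" "n \<noteq> eq n k" by (simp_all add: eq_def)

definition cnt :: "nat \<Rightarrow> basis \<Rightarrow> nat" where "cnt n u = card {j. j < n \<and> u j}"

definition termsKL :: "nat \<Rightarrow> nat \<Rightarrow> nat \<Rightarrow> nat \<Rightarrow> terms" where
  "termsKL n m k l = concat (map (\<lambda>j. [([j], th m l / 2), ([yq n k l], th m l / 2),
       ([j, yq n k l], - (th m l / 2))]) [0..<n]) @ [([yq n k l], - (th m l * real k))]"
definition TK :: "nat \<Rightarrow> nat \<Rightarrow> nat list \<Rightarrow> terms" where
  "TK n m K = concat (map (\<lambda>k. concat (map (termsKL n m k) [0..<m])) K)"
definition Ylist :: "nat \<Rightarrow> nat \<Rightarrow> nat \<Rightarrow> nat list" where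
  "Ylist n m k = map (yq n k) [0..<m]"
definition termsD :: "nat \<Rightarrow> nat \<Rightarrow> nat \<Rightarrow> terms" where
  "termsD n m k = concat (map (\<lambda>S. (eq n k # S, pi / 2 ^ m) # (if S = [] then [] else [(S, - (pi / 2 ^ m))]))
      (subseqs (Ylist n m k)))"
definition TD :: "nat \<Rightarrow> nat \<Rightarrow> nat list \<Rightarrow> terms" where
  "TD n m K = concat (map (termsD n m) K)"

lemma sum_list_map_concat: "sum_list (map f (concat xss)) = sum_list (map (\<lambda>xs. sum_list (map f xs)) xss)"
  by (induction xss) auto

lemma tphase_append: "tphase (T1 @ T2) u = tphase T1 u + tphase T2 u"
  by (simp add: tphase_def)

lemma tphase_concat: "tphase (concat Ts) u = sum_list (map (\<lambda>T. tphase T u) Ts)"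
  by (simp add: tphase_def sum_list_map_concat)

lemma card_pair: "j \<noteq> y \<Longrightarrow> card {q. (q = j \<or> q = y) \<and> u q} = (if u j then 1 else 0) + (if u y then 1 else 0)"
proof -
  assume "j \<noteq> y"
  have "{q. (q = j \<or> q = y) \<and> u q} = (if u j then {j} else {}) \<union> (if u y then {y} else {})" by auto
  then show ?thesis using \<open>j \<noteq> y\<close> by (cases "u j"; cases "u y") simp_all
qed

lemma card_single: "card {q. q = y \<and> u q} = (if u y then 1 else 0)"
proof -
  have "{q. q = y \<and> u q} = (if u y then {y} else {})" by auto
  then show ?thesis by simp
qed

lemma tphase_KL:
  assumes "m > 0"
  shows "tphase (termsKL n m k l) u = (if u (yq n k l) then th m l * (real (cnt n u) - real k) else 0)"
proof -
  have j: "tphase [([j], th m l / 2), ([yq n k l], th m l / 2), ([j, yq n k l], - (th m l / 2))] u =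
        (if u j \<and> u (yq n k l) then th m l else 0)" if "j < n" for j
  proof -
    have "j \<noteq> yq n k l" using that by (simp add: yq_def)
    then show ?thesis unfolding tphase_def
      by (cases "u j"; cases "u (yq n k l)") (simp_all add: card_pair card_single)
  qed
  let ?tr = "\<lambda>j. [([j], th m l / 2), ([yq n k l], th m l / 2), ([j, yq n k l], - (th m l / 2))]"
  have "tphase (termsKL n m k l) u = sum_list (map (\<lambda>j. tphase (?tr j) u) [0..<n]) +
      tphase [([yq n k l], - (th m l * real k))] u"
    unfolding termsKL_def tphase_append tphase_concat map_map o_def ..
  also have "sum_list (map (\<lambda>j. tphase (?tr j) u) [0..<n]) =
      sum_list (map (\<lambda>j. if u j \<and> u (yq n k l) then th m l else 0) [0..<n])"
    by (rule arg_cong[where f=sum_list], rule map_cong) (auto simp: j)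
  also have "tphase [([yq n k l], - (th m l * real k))] u = (if u (yq n k l) then - (th m l * real k) else 0)"
    by (simp add: tphase_def card_single)
  also have "sum_list (map (\<lambda>j. if u j \<and> u (yq n k l) then th m l else 0) [0..<n]) =
       (if u (yq n k l) then th m l * real (cnt n u) else 0)"
  proof -
    have "sum_list (map (\<lambda>j. if u j \<and> u (yq n k l) then th m l else 0) [0..<n]) =
        (\<Sum>j\<in>{0..<n}. if u j \<and> u (yq n k l) then th m l else 0)"
      by (simp add: interv_sum_list_conv_sum_set_nat)
    also have "\<dots> = (if u (yq n k l) then th m l * real (cnt n u) else 0)"
    proof (cases "u (yq n k l)")
      case True
      have "(\<Sum>j\<in>{0..<n}. if u j then th m l else 0) = (\<Sum>j\<in>{j\<in>{0..<n}. u j}. th m l)"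
        by (rule sum.inter_filter[symmetric]) simp
      also have "{j\<in>{0..<n}. u j} = {j. j < n \<and> u j}" by auto
      finally have "(\<Sum>j\<in>{0..<n}. if u j then th m l else 0) = real (cnt n u) * th m l"
        by (simp add: cnt_def)
      then show ?thesis using True by (simp add: mult.commute)
    qed simp
    finally show ?thesis .
  qed
  finally show ?thesis by (simp add: algebra_simps)
qed



lemma subseqs_set: "S \<in> set (subseqs xs) \<Longrightarrow> set S \<subseteq> set xs"
  using subseqs_powset[of xs] by blast

lemma subseqs_distinct: "S \<in> set (subseqs xs) \<Longrightarrow> distinct xs \<Longrightarrow> distinct S"
proof (induction xs arbitrary: S)
  case Nil then show ?case by simp
next
  case (Cons x xs)
  then consider (a) S' where "S = x # S'" "S' \<in> set (subseqs xs)" | (b) "S \<in> set (subseqs xs)"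
    by (auto simp: Let_def)
  then show ?case
  proof cases
    case a
    then have "set S' \<subseteq> set xs" by (simp add: subseqs_set)
    then show ?thesis using a Cons by auto
  next
    case b then show ?thesis using Cons by auto
  qed
qed

lemma sum_subseqs:
  assumes "distinct ys"
  shows "sum_list (map (\<lambda>S. h (set S)) (subseqs ys)) = sum h (Pow (set ys))"
proof -
  have "sum_list (map (\<lambda>S. h (set S)) (subseqs ys)) = sum_list (map h (map set (subseqs ys)))"
    by (simp add: o_def)
  also have "\<dots> = sum h (set (map set (subseqs ys)))"
    by (rule sum.distinct_set_conv_list[symmetric]) (rule distinct_set_subseqs[OF assms])
  also have "set (map set (subseqs ys)) = Pow (set ys)" using subseqs_powset[of ys] by simp
  finally show ?thesis .
qed

lemma neg1_card_prod:
  assumes "finite B"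
  shows "((-1::real) ^ card {q\<in>B. u q}) = (\<Prod>a\<in>B. if u a then -1 else 1)"
proof -
  have "(\<Prod>a\<in>B. if u a then (-1::real) else 1) = (\<Prod>a\<in>{q\<in>B. u q}. -1)"
    using assms by (rule prod.inter_filter[symmetric])
  then show ?thesis by simp
qed

lemma sum_neg1_pow:
  assumes "finite Y"
  shows "(\<Sum>B\<in>Pow Y. (-1::real) ^ card {q\<in>B. u q}) = (if \<forall>a\<in>Y. \<not> u a then 2 ^ card Y else 0)"
proof -
  have "(\<Sum>B\<in>Pow Y. (-1::real) ^ card {q\<in>B. u q}) = (\<Sum>B\<in>Pow Y. \<Prod>a\<in>B. if u a then -1 else 1)"
    by (rule sum.cong) (auto intro!: neg1_card_prod finite_subset[OF _ assms])
  also have "\<dots> = (\<Prod>a\<in>Y. 1 + (if u a then -1 else 1))" by (rule sum_Pow_prod[OF assms])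
  also have "\<dots> = (if \<forall>a\<in>Y. \<not> u a then 2 ^ card Y else 0)"
  proof (cases "\<forall>a\<in>Y. \<not> u a")
    case True then show ?thesis by simp
  next
    case False
    then obtain a where "a \<in> Y" "u a" by blast
    then show ?thesis using assms by (auto intro: prod_zero)
  qed
  finally show ?thesis .
qed

lemma distinct_Ylist: "distinct (Ylist n m k)"
  by (auto simp: Ylist_def distinct_map inj_on_def yq_def)

lemma card_Ylist: "card (set (Ylist n m k)) = m"
proof -
  have "card (set (Ylist n m k)) = length (Ylist n m k)" by (rule distinct_card[OF distinct_Ylist])
  then show ?thesis by (simp add: Ylist_def)
qed

lemma eq_notin_Y: "eq n k \<notin> set (Ylist n m k')"
  by (auto simp: Ylist_def eq_def yq_def)

lemma tphase_D:
  "tphase (termsD n m k) u = (if u (eq n k) \<and> (\<forall>l<m. \<not> u (yq n k l)) then pi else 0)"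
proof -
  let ?Y = "Ylist n m k" and ?e = "eq n k"
  let ?g = "\<lambda>S. (?e # S, pi / 2 ^ m) # (if S = [] then [] else [(S, - (pi / 2 ^ m))])"
  have g: "tphase (?g S) u = (if u ?e then (pi / 2 ^ m) * (-1) ^ card {q\<in>set S. u q} else 0)"
    if S: "S \<in> set (subseqs ?Y)" for S
  proof -
    have eS: "?e \<notin> set S" using subseqs_set[OF S] eq_notin_Y by blast
    have c: "card {q \<in> set (?e # S). u q} = card {q\<in>set S. u q} + (if u ?e then 1 else 0)"
    proof (cases "u ?e")
      case True
      then have "{q \<in> set (?e # S). u q} = insert ?e {q\<in>set S. u q}" by auto
      then show ?thesis using eS True by simp
    next
      case False
      then have "{q \<in> set (?e # S). u q} = {q\<in>set S. u q}" by auto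
      then show ?thesis using False by simp
    qed
    have "tphase (?g S) u = (if odd (card {q \<in> set (?e # S). u q}) then pi / 2 ^ m else 0) +
        (if odd (card {q\<in>set S. u q}) then - (pi / 2 ^ m) else 0)"
      by (cases "S = []") (simp_all add: tphase_def)
    then show ?thesis unfolding c by (cases "u ?e"; cases "even (card {q\<in>set S. u q})") simp_all
  qed
  have "tphase (termsD n m k) u = sum_list (map (\<lambda>S. tphase (?g S) u) (subseqs ?Y))"
    unfolding termsD_def tphase_concat map_map o_def ..
  also have "\<dots> = sum_list (map (\<lambda>S. if u ?e then (pi / 2 ^ m) * (-1) ^ card {q\<in>set S. u q} else 0) (subseqs ?Y))"
    by (rule arg_cong[where f=sum_list], rule map_cong) (auto simp: g)
  also have "\<dots> = (\<Sum>B\<in>Pow (set ?Y). if u ?e then (pi / 2 ^ m) * (-1) ^ card {q\<in>B. u q} else 0)"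
    by (rule sum_subseqs[OF distinct_Ylist])
  also have "\<dots> = (if u ?e then (pi / 2 ^ m) * (\<Sum>B\<in>Pow (set ?Y). (-1) ^ card {q\<in>B. u q}) else 0)"
    by (simp add: sum_distrib_left)
  also have "\<dots> = (if u ?e \<and> (\<forall>a\<in>set ?Y. \<not> u a) then pi else 0)"
    by (simp add: sum_neg1_pow card_Ylist)
  also have "(\<forall>a\<in>set ?Y. \<not> u a) \<longleftrightarrow> (\<forall>l<m. \<not> u (yq n k l))" by (auto simp: Ylist_def)
  finally show ?thesis .
qed

lemma tphase_TK:
  assumes "m > 0"
  shows "tphase (TK n m K) u = sum_list (map (\<lambda>k. sum_list (map (\<lambda>l.
     if u (yq n k l) then th m l * (real (cnt n u) - real k) else 0) [0..<m])) K)"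
  unfolding TK_def tphase_concat map_map o_def tphase_KL[OF assms] ..

lemma tphase_TD:
  "tphase (TD n m K) u = sum_list (map (\<lambda>k. if u (eq n k) \<and> (\<forall>l<m. \<not> u (yq n k l)) then pi else 0) K)"
  unfolding TD_def tphase_concat map_map o_def tphase_D ..

lemma cis_sum_list: "cis (sum_list (map f xs)) = prod_list (map (\<lambda>x. cis (f x)) xs)"
  by (induction xs) (auto simp: cis_mult[symmetric])

lemma cis_if0: "cis (if P then a else 0) = (if P then cis a else 1)"
  by simp

lemma gok_TK:
  shows "gok (TK n m K) (ak n)"
proof -
  have sets: "\<forall>x\<in>set (TK n m K). fst x \<noteq> [] \<and> distinct (fst x) \<and>
      (\<forall>q\<in>set (fst x). q < n \<or> (\<exists>k l. q = yq n k l))"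
    by (auto simp: TK_def termsKL_def yq_def)
  have "\<forall>i<length (TK n m K). gS (TK n m K) i \<noteq> [] \<and> distinct (gS (TK n m K) i)"
    using sets by (auto simp: gS_def)
  moreover have "inj_on (\<lambda>(i, p). ak n i p) (gidx (TK n m K))"
    by (auto simp: inj_on_def ak_def)
  moreover have "\<forall>(i, p)\<in>gidx (TK n m K). ak n i p \<notin> set (concat (map fst (TK n m K)))"
  proof (clarify)
    fix i p assume "ak n i p \<in> set (concat (map fst (TK n m K)))"
    then obtain x where "x \<in> set (TK n m K)" "ak n i p \<in> set (fst x)" by auto
    then have "ak n i p < n \<or> (\<exists>k l. ak n i p = yq n k l)" using sets by blast
    then show False by (auto simp: ak_def yq_def)
  qed
  ultimately show ?thesis by (simp add: gok_def)
qed

lemma gok_TD: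
  shows "gok (TD n m K) (ad n)"
proof -
  have sets: "\<forall>x\<in>set (TD n m K). fst x \<noteq> [] \<and> distinct (fst x) \<and>
      (\<forall>q\<in>set (fst x). (\<exists>k. q = eq n k) \<or> (\<exists>k l. q = yq n k l))"
  proof
    fix x assume "x \<in> set (TD n m K)"
    then obtain k S where S: "S \<in> set (subseqs (Ylist n m k))"
      and x: "x = (eq n k # S, pi / 2 ^ m) \<or> (S \<noteq> [] \<and> x = (S, - (pi / 2 ^ m)))"
      by (auto simp: TD_def termsD_def split: if_splits)
    have d: "distinct S" by (rule subseqs_distinct[OF S distinct_Ylist])
    have sY: "set S \<subseteq> set (Ylist n m k)" by (rule subseqs_set[OF S])
    have "eq n k \<notin> set S" using sY eq_notin_Y by blast
    moreover have "\<forall>q\<in>set S. \<exists>k l. q = yq n k l"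
    proof
      fix q assume "q \<in> set S"
      then have "q \<in> set (Ylist n m k)" using sY by blast
      then show "\<exists>k l. q = yq n k l" by (auto simp: Ylist_def)
    qed
    ultimately have A: "\<forall>q\<in>set (eq n k # S). (\<exists>k. q = eq n k) \<or> (\<exists>k l. q = yq n k l)"
      and B: "\<forall>q\<in>set S. (\<exists>k. q = eq n k) \<or> (\<exists>k l. q = yq n k l)" by auto
    show "fst x \<noteq> [] \<and> distinct (fst x) \<and>
      (\<forall>q\<in>set (fst x). (\<exists>k. q = eq n k) \<or> (\<exists>k l. q = yq n k l))"
      using x
    proof (elim disjE)
      assume "x = (eq n k # S, pi / 2 ^ m)"
      then show ?thesis using A d \<open>eq n k \<notin> set S\<close> by simp
    next
      assume "S \<noteq> [] \<and> x = (S, - (pi / 2 ^ m))"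
      then show ?thesis using B d by simp
    qed
  qed
  have "\<forall>i<length (TD n m K). gS (TD n m K) i \<noteq> [] \<and> distinct (gS (TD n m K) i)"
    using sets by (auto simp: gS_def)
  moreover have "inj_on (\<lambda>(i, p). ad n i p) (gidx (TD n m K))"
    by (auto simp: inj_on_def ad_def)
  moreover have "\<forall>(i, p)\<in>gidx (TD n m K). ad n i p \<notin> set (concat (map fst (TD n m K)))"
  proof (clarify)
    fix i p assume "ad n i p \<in> set (concat (map fst (TD n m K)))"
    then obtain x where "x \<in> set (TD n m K)" "ad n i p \<in> set (fst x)" by auto
    then have "(\<exists>k. ad n i p = eq n k) \<or> (\<exists>k l. ad n i p = yq n k l)" using sets by blast
    then show False by (auto simp: ad_def yq_def eq_def)
  qed
  ultimately show ?thesis by (simp add: gok_def)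
qed



definition ys :: "nat \<Rightarrow> nat \<Rightarrow> nat list \<Rightarrow> nat list" where
  "ys n m K = concat (map (Ylist n m) K)"
definition es :: "nat \<Rightarrow> nat list \<Rightarrow> nat list" where
  "es n K = map (eq n) K"
definition LH :: "nat list \<Rightarrow> layer" where
  "LH qs = map (\<lambda>q. G1 q Hm) qs"

definition dk :: "nat \<Rightarrow> nat \<Rightarrow> nat" where
  "dk n a = fst (prod_decode (snd (prod_decode (a - n - 1))))"
definition dl :: "nat \<Rightarrow> nat \<Rightarrow> nat" where
  "dl n a = snd (prod_decode (snd (prod_decode (a - n - 1))))"

lemma dk_yq[simp]: "dk n (yq n k l) = k" and dl_yq[simp]: "dl n (yq n k l) = l"
  and dk_eq[simp]: "dk n (eq n k) = k"
  by (simp_all add: dk_def dl_def yq_def eq_def qa_def)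

definition cY :: "nat \<Rightarrow> nat \<Rightarrow> nat \<Rightarrow> nat \<Rightarrow> complex" where
  "cY n m c a = cis (th m (dl n a) * (real c - real (dk n a)))"

definition zc :: "nat \<Rightarrow> nat \<Rightarrow> nat list \<Rightarrow> basis \<Rightarrow> bool" where
  "zc n m K w \<longleftrightarrow> (\<forall>a\<in>set (ys n m K). \<not> w a) \<and> (\<forall>j\<in>ganc (TK n m K) (ak n). \<not> w j) \<and>
     (\<forall>j\<in>ganc (TD n m K) (ad n). \<not> w j)"

lemma ganc_ak: "j \<in> ganc T (ak n) \<Longrightarrow> \<exists>i p. j = qa n 2 i p"
  by (auto simp: ganc_def ak_def)
lemma ganc_ad: "j \<in> ganc T (ad n) \<Longrightarrow> \<exists>i p. j = qa n 3 i p"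
  by (auto simp: ganc_def ad_def)

lemma set_ys: "a \<in> set (ys n m K) \<longleftrightarrow> (\<exists>k\<in>set K. \<exists>l<m. a = yq n k l)"
proof
  assume "a \<in> set (ys n m K)"
  then obtain k where "k \<in> set K" "a \<in> set (Ylist n m k)" by (auto simp: ys_def)
  then show "\<exists>k\<in>set K. \<exists>l<m. a = yq n k l" by (auto simp: Ylist_def)
next
  assume "\<exists>k\<in>set K. \<exists>l<m. a = yq n k l"
  then obtain k l where "k \<in> set K" "l < m" "a = yq n k l" by blast
  then have "a \<in> set (Ylist n m k)" by (auto simp: Ylist_def)
  then show "a \<in> set (ys n m K)" using \<open>k \<in> set K\<close> by (auto simp: ys_def)
qed
lemma set_es: "a \<in> set (es n K) \<longleftrightarrow> (\<exists>k\<in>set K. a = eq n k)"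
  by (auto simp: es_def)

lemma distinct_ys: "distinct K \<Longrightarrow> distinct (ys n m K)"
  unfolding ys_def
proof (rule distinct_concat_map)
  fix x y assume "x \<in> set K" "y \<in> set K" "x \<noteq> y"
  then show "set (Ylist n m x) \<inter> set (Ylist n m y) = {}" by (auto simp: Ylist_def yq_def)
qed (simp_all add: distinct_Ylist)
lemma distinct_es: "distinct K \<Longrightarrow> distinct (es n K)"
  by (auto simp: es_def distinct_map inj_on_def eq_def)

lemma prod_list_map_concat: "prod_list (map f (concat xss)) = prod_list (map (\<lambda>xs. prod_list (map f xs)) xss)"
  by (induction xss) auto

lemma ket_upd_iff:
  assumes "\<forall>a\<in>Y. \<not> w a" "B \<subseteq> Y"
  shows "upd Y B u = w \<longleftrightarrow> B = {} \<and> upd Y {} u = w"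
proof
  assume h: "upd Y B u = w"
  have "B = {}"
  proof (rule ccontr)
    assume "B \<noteq> {}"
    then obtain a where "a \<in> B" by blast
    then have "upd Y B u a" "a \<in> Y" using assms(2) by (auto simp: upd_def)
    then show False using h assms(1) by auto
  qed
  then show "B = {} \<and> upd Y {} u = w" using h by simp
qed simp

lemma had_ket:
  assumes fin: "finite Y" and z: "\<forall>a\<in>Y. \<not> w a"
  shows "had Y (ket w) = (\<lambda>u. if upd Y {} u = w then r2 ^ card Y else 0)"
proof
  fix u
  have "(\<Sum>B\<in>Pow Y. sg u B * ket w (upd Y B u)) = (\<Sum>B\<in>Pow Y. if B = {} then (if upd Y {} u = w then 1 else 0) else 0)"
  proof (rule sum.cong)
    fix B assume "B \<in> Pow Y"
    then have "(upd Y B u = w) = (B = {} \<and> upd Y {} u = w)" using ket_upd_iff[OF z] by blast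
    then show "sg u B * ket w (upd Y B u) = (if B = {} then (if upd Y {} u = w then 1 else 0) else 0)"
      by (auto simp: ket_def sg_def)
  qed simp
  also have "\<dots> = (if upd Y {} u = w then 1 else 0)" using fin by simp
  finally show "had Y (ket w) u = (if upd Y {} u = w then r2 ^ card Y else 0)"
    by (simp add: had_def)
qed

context
  fixes n m :: nat and K :: "nat list"
  assumes m0: "m > 0" and dK: "distinct K"
begin

abbreviation "YY \<equiv> set (ys n m K)"
abbreviation "EE \<equiv> set (es n K)"

lemma cis_TK:
  assumes B: "B \<subseteq> YY"
  shows "cis (tphase (TK n m K) (upd YY B v)) = (\<Prod>a\<in>B. cY n m (cnt n (upd YY B v)) a)"
proof -
  let ?u = "upd YY B v" and ?c = "cnt n (upd YY B v)"
  have "cis (tphase (TK n m K) ?u) = prod_list (map (\<lambda>k. prod_list (map (\<lambda>l.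
     if ?u (yq n k l) then cY n m ?c (yq n k l) else 1) [0..<m])) K)"
    by (simp add: tphase_TK[OF m0] cis_sum_list cY_def o_def cis_if0 cong: if_cong)
  also have "\<dots> = prod_list (map (\<lambda>a. if ?u a then cY n m ?c a else 1) (ys n m K))"
    unfolding ys_def prod_list_map_concat Ylist_def map_map o_def ..
  also have "\<dots> = (\<Prod>a\<in>YY. if ?u a then cY n m ?c a else 1)"
    by (rule prod.distinct_set_conv_list[symmetric]) (rule distinct_ys[OF dK])
  also have "\<dots> = (\<Prod>a\<in>{a\<in>YY. ?u a}. cY n m ?c a)"
    by (rule prod.inter_filter[symmetric]) simp
  also have "{a\<in>YY. ?u a} = B" using B by (auto simp: upd_def)
  finally show ?thesis .
qed

lemma cnt_upd_Y: "cnt n (upd YY B v) = cnt n v"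
proof -
  have "\<forall>j<n. j \<notin> YY" by (auto simp: set_ys yq_def)
  then have "{j. j < n \<and> upd YY B v j} = {j. j < n \<and> v j}" by (auto simp: upd_def)
  then show ?thesis by (simp add: cnt_def)
qed

lemma ganc_K_notY: "j \<in> ganc (TK n m K) (ak n) \<Longrightarrow> j \<notin> YY"
  by (auto dest!: ganc_ak simp: set_ys yq_def)

definition amp :: "nat \<Rightarrow> basis \<Rightarrow> complex" where
  "amp c v = r2 ^ card YY * r2 ^ card YY * (\<Prod>a\<in>YY. 1 + (if v a then -1 else 1) * cY n m c a)"

lemma A_ket:
  assumes z: "zc n m K w"
  shows "had YY (run (gadget (TK n m K) (ak n)) (had YY (ket w))) =
         (\<lambda>v. if upd YY {} v = w then amp (cnt n w) v else 0)"
proof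
  fix v
  let ?k = "card YY"
  have zY: "\<forall>a\<in>YY. \<not> w a" using z by (simp add: zc_def)
  have h1: "had YY (ket w) = (\<lambda>u. if upd YY {} u = w then r2 ^ ?k else 0)"
    by (rule had_ket[OF _ zY]) simp
  have h2: "run (gadget (TK n m K) (ak n)) (had YY (ket w)) =
      (\<lambda>u. if upd YY {} u = w then r2 ^ ?k * cis (tphase (TK n m K) u) else 0)"
  proof
    fix u
    show "run (gadget (TK n m K) (ak n)) (had YY (ket w)) u =
      (if upd YY {} u = w then r2 ^ ?k * cis (tphase (TK n m K) u) else 0)"
    proof (cases "upd YY {} u = w")
      case True
      have "\<forall>j\<in>ganc (TK n m K) (ak n). \<not> u j"
      proof
        fix j assume j: "j \<in> ganc (TK n m K) (ak n)"
        then have "j \<notin> YY" by (rule ganc_K_notY)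
        moreover have "upd YY {} u j = w j" using True by simp
        ultimately have "u j = w j" by (simp add: upd_def)
        then show "\<not> u j" using z j by (simp add: zc_def)
      qed
      then show ?thesis using True run_gadget_zero[OF gok_TK] h1 by simp
    next
      case False
      then show ?thesis using run_gadget[OF gok_TK] h1 by simp
    qed
  qed
  show "had YY (run (gadget (TK n m K) (ak n)) (had YY (ket w))) v =
        (if upd YY {} v = w then amp (cnt n w) v else 0)"
  proof (cases "upd YY {} v = w")
    case False
    then show ?thesis unfolding h2 by (simp add: had_def upd_upd)
  next
    case True
    have e: "sg v B * cis (tphase (TK n m K) (upd YY B v)) =
        (\<Prod>a\<in>B. (if v a then -1 else 1) * cY n m (cnt n w) a)" if "B \<subseteq> YY" for B
    proof -
      have "cnt n (upd YY B v) = cnt n w" using True cnt_upd_Y by (metis)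
      then show ?thesis using cis_TK[OF that, of v] by (simp add: sg_def prod.distrib)
    qed
    have "had YY (run (gadget (TK n m K) (ak n)) (had YY (ket w))) v =
        r2 ^ ?k * (\<Sum>B\<in>Pow YY. sg v B * (r2 ^ ?k * cis (tphase (TK n m K) (upd YY B v))))"
      unfolding h2 by (simp add: had_def upd_upd True)
    also have "\<dots> = r2 ^ ?k * r2 ^ ?k * (\<Sum>B\<in>Pow YY. sg v B * cis (tphase (TK n m K) (upd YY B v)))"
      by (simp add: sum_distrib_left mult_ac)
    also have "(\<Sum>B\<in>Pow YY. sg v B * cis (tphase (TK n m K) (upd YY B v))) =
        (\<Sum>B\<in>Pow YY. \<Prod>a\<in>B. (if v a then -1 else 1) * cY n m (cnt n w) a)"
      by (rule sum.cong) (simp_all add: e)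
    also have "r2 ^ ?k * r2 ^ ?k * (\<Sum>B\<in>Pow YY. \<Prod>a\<in>B. (if v a then -1 else 1) * cY n m (cnt n w) a)
       = amp (cnt n w) v" unfolding amp_def
      by (simp only: sum_Pow_prod[OF finite_set])
    finally show ?thesis using True by simp
  qed
qed

end


lemma had_zero:
  assumes "\<And>B. B \<subseteq> Q \<Longrightarrow> \<psi> (upd Q B v) = 0"
  shows "had Q \<psi> v = 0"
  unfolding had_def using assms by simp

context
  fixes n m :: nat and K :: "nat list"
  assumes m0: "m > 0" and dK: "distinct K" and Kn: "\<forall>k\<in>set K. k \<le> n" and nm: "n < 2 ^ m"
begin

lemma amp_nz:
  assumes c: "c \<le> n" and nz: "amp n m K c v \<noteq> 0" and k: "k \<in> set K"
  shows "(\<forall>l<m. \<not> v (yq n k l)) \<longleftrightarrow> k = c"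
proof -
  have "(\<Prod>a\<in>set (ys n m K). 1 + (if v a then -1 else 1) * cY n m c a) \<noteq> 0"
    using nz by (auto simp: amp_def[OF m0 dK])
  then have all: "\<forall>a\<in>set (ys n m K). 1 + (if v a then -1 else 1) * cY n m c a \<noteq> 0"
    by (simp add: prod_zero_iff)
  show ?thesis
  proof
    assume z: "\<forall>l<m. \<not> v (yq n k l)"
    show "k = c"
    proof (rule ccontr)
      assume "k \<noteq> c"
      define d where "d = int c - int k"
      have "d \<noteq> 0" using \<open>k \<noteq> c\<close> by (simp add: d_def)
      moreover have "\<bar>d\<bar> < 2 ^ m"
      proof -
        have "\<bar>d\<bar> \<le> int n" using c Kn k by (auto simp: d_def)
        also have "int n < 2 ^ m" using nm by (metis of_nat_less_iff of_nat_numeral of_nat_power)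
        finally show ?thesis .
      qed
      ultimately obtain l where l: "l < m" "cis (th m l * of_int d) = -1"
        using exists_half_turn by blast
      have "cY n m c (yq n k l) = -1" using l(2) by (simp add: cY_def d_def)
      moreover have "yq n k l \<in> set (ys n m K)" using k l(1) by (auto simp: set_ys)
      ultimately show False using all z l(1) by force
    qed
  next
    assume "k = c"
    show "\<forall>l<m. \<not> v (yq n k l)"
    proof (intro allI impI)
      fix l assume "l < m"
      then have "yq n k l \<in> set (ys n m K)" using k by (auto simp: set_ys)
      moreover have "cY n m c (yq n k l) = 1" using \<open>k = c\<close> by (simp add: cY_def)
      ultimately show "\<not> v (yq n k l)" using all by force
    qed
  qed
qed

lemma cis_TD:
  assumes B: "B \<subseteq> set (es n K)"
  shows "cis (tphase (TD n m K) (upd (set (es n K)) B v)) =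
    (\<Prod>a\<in>B. if (\<forall>l<m. \<not> v (yq n (dk n a) l)) then -1 else 1)"
proof -
  let ?E = "set (es n K)" let ?u = "upd ?E B v"
  let ?f = "\<lambda>a. \<forall>l<m. \<not> v (yq n (dk n a) l)"
  have uy: "?u (yq n k l) = v (yq n k l)" for k l by (auto simp: upd_def set_es)
  have "cis (tphase (TD n m K) ?u) = prod_list (map (\<lambda>k. if eq n k \<in> B \<and> ?f (eq n k) then -1 else 1) K)"
    unfolding tphase_TD cis_sum_list
  proof (rule arg_cong[where f=prod_list], rule map_cong)
    fix k assume "k \<in> set K"
    then have "?u (eq n k) = (eq n k \<in> B)" by (auto simp: upd_def set_es)
    then show "cis (if ?u (eq n k) \<and> (\<forall>l<m. \<not> ?u (yq n k l)) then pi else 0) =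
        (if eq n k \<in> B \<and> ?f (eq n k) then -1 else 1)" by (simp add: uy)
  qed simp
  also have "\<dots> = prod_list (map (\<lambda>a. if a \<in> B \<and> ?f a then -1 else 1) (es n K))"
    by (simp add: es_def o_def)
  also have "\<dots> = (\<Prod>a\<in>?E. if a \<in> B \<and> ?f a then -1 else 1)"
    by (rule prod.distinct_set_conv_list[symmetric]) (rule distinct_es[OF dK])
  also have "\<dots> = (\<Prod>a\<in>?E. if a \<in> B then (if ?f a then -1 else 1) else 1)"
    by (rule prod.cong) auto
  also have "\<dots> = (\<Prod>a\<in>{a\<in>?E. a \<in> B}. if ?f a then -1 else 1)"
    by (rule prod.inter_filter[symmetric]) simp
  also have "{a\<in>?E. a \<in> B} = B" using B by auto
  finally show ?thesis .
qed

end


definition flipset :: "nat set \<Rightarrow> basis \<Rightarrow> basis" where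
  "flipset F w = (\<lambda>j. if j \<in> F then \<not> w j else w j)"

lemma flipset_invol[simp]: "flipset F (flipset F w) = w"
  by (auto simp: flipset_def fun_eq_iff)

lemma cnt_le: "cnt n w \<le> n"
proof -
  have "{j. j < n \<and> w j} \<subseteq> {..<n}" by auto
  then have "card {j. j < n \<and> w j} \<le> card {..<n}" by (rule card_mono[rotated]) simp
  then show ?thesis by (simp add: cnt_def)
qed

lemma ganc_ad_notY: "j \<in> ganc T (ad n) \<Longrightarrow> j \<notin> set (ys n m K)"
  by (auto dest!: ganc_ad simp: set_ys yq_def)
lemma ganc_ad_notE: "j \<in> ganc T (ad n) \<Longrightarrow> j \<notin> set (es n K)"
  by (auto dest!: ganc_ad simp: set_es eq_def)
lemma ganc_ak_notE: "j \<in> ganc T (ak n) \<Longrightarrow> j \<notin> set (es n K)"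
  by (auto dest!: ganc_ak simp: set_es eq_def)
lemma E_notY: "j \<in> set (es n K) \<Longrightarrow> j \<notin> set (ys n m K')"
  by (auto simp: set_es set_ys)

context
  fixes n m :: nat and K :: "nat list"
  assumes m0: "m > 0" and dK: "distinct K" and Kn: "\<forall>k\<in>set K. k \<le> n" and nm: "n < 2 ^ m"
begin

definition phi :: "basis \<Rightarrow> nat \<Rightarrow> state" where
  "phi w c = (\<lambda>v. if upd (set (ys n m K)) {} v = w then amp n m K c v else 0)"

lemma Q_step:
  assumes z: "zc n m K w0"
  defines "c \<equiv> cnt n w0"
  defines "F \<equiv> {eq n c} \<inter> set (es n K)"
  shows "had (set (es n K)) (run (gadget (TD n m K) (ad n)) (had (set (es n K)) (phi w0 c))) =
         phi (flipset F w0) c"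
proof
  fix v
  let ?E = "set (es n K)" and ?Y = "set (ys n m K)"
  let ?w1 = "flipset F w0"
  have cn: "c \<le> n" by (simp add: c_def cnt_le)
  have FE: "F \<subseteq> ?E" by (auto simp: F_def)
  show "had ?E (run (gadget (TD n m K) (ad n)) (had ?E (phi w0 c))) v = phi ?w1 c v"
  proof (cases "\<exists>j\<in>ganc (TD n m K) (ad n). v j")
    case True
    then obtain j where j: "j \<in> ganc (TD n m K) (ad n)" "v j" by blast
    have jE: "j \<notin> ?E" "j \<notin> ?Y" using j(1) ganc_ad_notE ganc_ad_notY by blast+
    have w0j: "\<not> w0 j" using z j(1) by (simp add: zc_def)
    have ne: "upd ?Y {} (upd ?E B v) \<noteq> w0" if "B \<subseteq> ?E" for B
    proof
      assume "upd ?Y {} (upd ?E B v) = w0"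
      then have "upd ?Y {} (upd ?E B v) j = w0 j" by simp
      then show False using jE j(2) w0j by (simp add: upd_def)
    qed
    have "had ?E (run (gadget (TD n m K) (ad n)) (had ?E (phi w0 c))) v = 0"
    proof (rule had_zero)
      fix B assume B: "B \<subseteq> ?E"
      have "had ?E (phi w0 c) (upd ?E B v) = 0"
      proof (rule had_zero)
        fix B' assume "B' \<subseteq> ?E"
        then show "phi w0 c (upd ?E B' (upd ?E B v)) = 0" using ne by (simp add: phi_def upd_upd)
      qed
      then show "run (gadget (TD n m K) (ad n)) (had ?E (phi w0 c)) (upd ?E B v) = 0"
        by (simp add: run_gadget[OF gok_TD])
    qed
    moreover have "phi ?w1 c v = 0"
    proof -
      have "upd ?Y {} v \<noteq> ?w1"
      proof
        assume "upd ?Y {} v = ?w1"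
        then have "upd ?Y {} v j = ?w1 j" by simp
        moreover have "j \<notin> F" using FE jE by blast
        ultimately show False using jE j(2) w0j by (simp add: upd_def flipset_def)
      qed
      then show ?thesis by (simp add: phi_def)
    qed
    ultimately show ?thesis by simp
  next
    case False
    let ?f = "\<lambda>a. \<forall>l<m. \<not> v (yq n (dk n a) l)"
    let ?gd = "\<lambda>u. (\<Prod>i\<leftarrow>[0..<length (TD n m K)]. if gpar (TD n m K) (ad n) u i then cis (gA (TD n m K) i) else 1)"
    have run_eq: "run (gadget (TD n m K) (ad n)) (had ?E (phi w0 c)) = (\<lambda>u. ?gd u * had ?E (phi w0 c) u)"
      by (rule run_gadget[OF gok_TD])
    have dB: "?gd (upd ?E B v) = (\<Prod>a\<in>B. if ?f a then -1 else 1)" if B: "B \<subseteq> ?E" for B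
    proof -
      have "\<forall>j\<in>ganc (TD n m K) (ad n). \<not> upd ?E B v j"
        using False ganc_ad_notE by (auto simp: upd_def)
      then have "?gd (upd ?E B v) = cis (tphase (TD n m K) (upd ?E B v))" by (rule gk_cis[OF gok_TD])
      also have "\<dots> = (\<Prod>a\<in>B. if ?f a then -1 else 1)" by (rule cis_TD[OF m0 dK Kn nm B])
      finally show ?thesis .
    qed
    define v' where "v' = (\<lambda>j. if j \<in> ?E \<and> ?f j then \<not> v j else v j)"
    have "had ?E (run (gadget (TD n m K) (ad n)) (had ?E (phi w0 c))) v = phi w0 c v'"
      unfolding run_eq v'_def by (rule had_phase_had[OF finite_set dB])
    also have "\<dots> = phi ?w1 c v"
    proof -
      have ampeq: "amp n m K c v' = amp n m K c v"
      proof -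
        have "\<forall>a\<in>?Y. v' a = v a" unfolding v'_def using E_notY[of _ n K m K] by auto
        then show ?thesis unfolding amp_def[OF m0 dK] by (intro arg_cong2[where f="(*)"] refl prod.cong) auto
      qed
      show ?thesis
      proof (cases "amp n m K c v = 0")
        case True then show ?thesis by (simp add: phi_def ampeq)
      next
        case nz: False
        have fk: "?f (eq n k) \<longleftrightarrow> k = c" if "k \<in> set K" for k
          using amp_nz[OF m0 dK Kn nm cn nz that] by simp
        have vF: "v' = flipset F v"
        proof
          fix j
          show "v' j = flipset F v j"
          proof (cases "j \<in> ?E")
            case True
            then obtain k where k: "k \<in> set K" "j = eq n k" by (auto simp: set_es)
            have "(j \<in> ?E \<and> ?f j) \<longleftrightarrow> j \<in> F" using k fk by (auto simp: F_def set_es)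
            then show ?thesis by (simp add: v'_def flipset_def)
          next
            case False
            then have "j \<notin> F" using FE by blast
            then show ?thesis using False by (simp add: v'_def flipset_def)
          qed
        qed
        have FY: "F \<inter> ?Y = {}" using FE E_notY by blast
        have "upd ?Y {} (flipset F v) = flipset F (upd ?Y {} v)"
          using FY by (auto simp: upd_def flipset_def fun_eq_iff)
        then have "(upd ?Y {} v' = w0) \<longleftrightarrow> (upd ?Y {} v = ?w1)"
          unfolding vF by (metis flipset_invol)
        then show ?thesis by (simp add: phi_def ampeq)
      qed
    qed
    finally show ?thesis .
  qed
qed

end


definition Wc :: "nat \<Rightarrow> nat \<Rightarrow> nat list \<Rightarrow> circuit" where
  "Wc n m K = [LH (ys n m K)] @ gadget (TK n m K) (ak n) @ [LH (ys n m K)] @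
     [LH (es n K)] @ gadget (TD n m K) (ad n) @ [LH (es n K)] @
     [LH (ys n m K)] @ gadget (neg_terms (TK n m K)) (ak n) @ [LH (ys n m K)]"

definition Pc :: "nat \<Rightarrow> nat list \<Rightarrow> circuit" where
  "Pc n K = [LH (n # es n K), [FanOut n (es n K)], LH (n # es n K)]"

definition circ :: "nat \<Rightarrow> nat \<Rightarrow> nat list \<Rightarrow> bool \<Rightarrow> circuit" where
  "circ n m K fl = Wc n m K @ Pc n K @ Wc n m K @ (if fl then [[G1 n Xm]] else [])"

lemma run_Cons: "run (L # C) \<psi> = run C (apply_layer L \<psi>)"
  by (simp add: run_def)

lemma ket_comp_invol:
  assumes "\<And>w. f (f w) = w"
  shows "(\<lambda>w. ket v (f w)) = ket (f v)"
proof
  fix w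
  have "(f w = v) = (w = f v)" by (metis assms)
  then show "ket v (f w) = ket (f v) w" by (simp add: ket_def)
qed

context
  fixes n m :: nat and K :: "nat list"
  assumes m0: "m > 0" and dK: "distinct K" and Kn: "\<forall>k\<in>set K. k \<le> n" and nm: "n < 2 ^ m"
begin

lemma layer_LH: "distinct qs \<Longrightarrow> apply_layer (LH qs) \<psi> = had (set qs) \<psi>"
  unfolding LH_def by (rule had_layer)

lemma zc_flip:
  assumes "zc n m K w" "F \<subseteq> set (es n K)"
  shows "zc n m K (flipset F w)"
proof -
  have "\<forall>j\<in>F. j \<notin> set (ys n m K) \<and> j \<notin> ganc (TK n m K) (ak n) \<and> j \<notin> ganc (TD n m K) (ad n)"
    using assms(2) E_notY ganc_ad_notE ganc_ak_notE by blast
  then show ?thesis using assms(1) by (auto simp: zc_def flipset_def)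
qed

lemma cnt_flip: "F \<subseteq> set (es n K) \<Longrightarrow> cnt n (flipset F w) = cnt n w"
proof -
  assume "F \<subseteq> set (es n K)"
  then have "\<forall>j<n. j \<notin> F"
  proof (intro allI impI)
    fix j assume FE: "F \<subseteq> set (es n K)" and "j < n"
    show "j \<notin> F"
    proof
      assume "j \<in> F"
      then have "j \<in> set (es n K)" using FE by blast
      then obtain k where "j = eq n k" by (auto simp: set_es)
      then show False using \<open>j < n\<close> by simp
    qed
  qed
  then have "{j. j < n \<and> flipset F w j} = {j. j < n \<and> w j}" by (auto simp: flipset_def)
  then show ?thesis by (simp add: cnt_def)
qed

lemma W_ket:
  assumes z: "zc n m K w0"
  shows "run (Wc n m K) (ket w0) = ket (flipset ({eq n (cnt n w0)} \<inter> set (es n K)) w0)"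
proof -
  let ?Y = "set (ys n m K)" and ?E = "set (es n K)"
  let ?F = "{eq n (cnt n w0)} \<inter> set (es n K)"
  let ?w1 = "flipset ?F w0"
  let ?GK = "run (gadget (TK n m K) (ak n))" and ?GKi = "run (gadget (neg_terms (TK n m K)) (ak n))"
  let ?GD = "run (gadget (TD n m K) (ad n))"
  have dY: "distinct (ys n m K)" and dE: "distinct (es n K)" using dK by (simp_all add: distinct_ys distinct_es)
  have FE: "?F \<subseteq> ?E" by blast
  have z1: "zc n m K ?w1" by (rule zc_flip[OF z FE])
  have c1: "cnt n ?w1 = cnt n w0" by (rule cnt_flip[OF FE])
  have A0: "had ?Y (?GK (had ?Y (ket w0))) = phi n m K w0 (cnt n w0)"
    unfolding A_ket[OF m0 dK z] phi_def[OF m0 dK Kn nm] ..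
  have A1: "had ?Y (?GK (had ?Y (ket ?w1))) = phi n m K ?w1 (cnt n w0)"
    unfolding A_ket[OF m0 dK z1] phi_def[OF m0 dK Kn nm] c1 ..
  have "run (Wc n m K) (ket w0) = had ?Y (?GKi (had ?Y (had ?E (?GD (had ?E (had ?Y (?GK (had ?Y (ket w0)))))))))"
    by (simp add: Wc_def run_append run_Cons run_Nil layer_LH dY dE)
  also have "\<dots> = had ?Y (?GKi (had ?Y (phi n m K ?w1 (cnt n w0))))"
    unfolding A0 Q_step[OF m0 dK Kn nm z] ..
  also have "\<dots> = had ?Y (?GKi (had ?Y (had ?Y (?GK (had ?Y (ket ?w1))))))"
    unfolding A1 ..
  also have "\<dots> = ket ?w1"
    by (simp add: had_had gadget_neg_inv[OF gok_TK])
  finally show ?thesis .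
qed

lemma P_ket:
  assumes Kne: "K \<noteq> []"
  shows "run (Pc n K) (ket v) = ket (colpar (set (es n K)) (\<lambda>_. n) v)"
proof -
  let ?E = "set (es n K)" and ?Q = "set (n # es n K)"
  have dE: "distinct (es n K)" using dK by (simp add: distinct_es)
  have nE: "n \<notin> ?E" by (auto simp: set_es)
  have dQ: "distinct (n # es n K)" using dE nE by simp
  have fan: "apply_layer [FanOut n (es n K)] \<phi> = (\<lambda>w. \<phi> (flipby ?E (\<lambda>_. n) w))" for \<phi>
    using fanout_layer[of "[FanOut n (es n K)]" "\<lambda>_. n" \<phi>] dE nE by simp
  have "run (Pc n K) (ket v) = had ?Q (\<lambda>w. had ?Q (ket v) (flipby ?E (\<lambda>_. n) w))"
    by (simp add: Pc_def run_def layer_LH[OF dQ] fan)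
  also have "\<dots> = (\<lambda>w. ket v (colpar ?E (\<lambda>_. n) w))"
    by (rule had_flip_had) (use nE in auto)
  also have "\<dots> = ket (colpar ?E (\<lambda>_. n) v)"
    by (rule ket_comp_invol) (rule colpar_invol, use nE in auto)
  finally show ?thesis .
qed

lemma X_ket: "run [[G1 n Xm]] (ket v) = ket (v(n := \<not> v n))"
proof -
  have "run [[G1 n Xm]] (ket v) = (\<lambda>w. ket v (w(n := \<not> w n)))"
    by (simp add: run_single apply_layer_def X_gate del: apply_gate.simps)
  also have "\<dots> = ket (v(n := \<not> v n))" by (rule ket_comp_invol) simp
  finally show ?thesis .
qed

lemma circ_correct:
  assumes Kne: "K \<noteq> []" and x: "\<forall>i>n. \<not> x i"
  shows "run (circ n m K fl) (ket x) = ket (x(n := (x n \<noteq> (cnt n x \<in> set K)) \<noteq> fl))"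
proof -
  let ?E = "set (es n K)"
  let ?c = "cnt n x"
  let ?F = "{eq n ?c} \<inter> ?E"
  have FE: "?F \<subseteq> ?E" by blast
  have b1: "\<forall>j\<in>set (ys n m K). n < j" by (auto simp: set_ys)
  have b2: "\<forall>j\<in>ganc (TK n m K) (ak n). n < j" using ganc_ak by fastforce
  have b3: "\<forall>j\<in>ganc (TD n m K) (ad n). n < j" using ganc_ad by fastforce
  have b4: "\<forall>j\<in>?E. n < j" by (auto simp: set_es)
  have big: "\<forall>j\<in>set (ys n m K) \<union> ganc (TK n m K) (ak n) \<union> ganc (TD n m K) (ad n) \<union> ?E. n < j"
    using b1 b2 b3 b4 by blast
  have z: "zc n m K x" using big x by (auto simp: zc_def)
  have xE: "\<forall>a\<in>?E. \<not> x a" using big x by auto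
  let ?w1 = "flipset ?F x"
  have W1: "run (Wc n m K) (ket x) = ket ?w1" by (rule W_ket[OF z])
  have cardF: "{a\<in>?E. ?w1 a} = ?F" using xE by (auto simp: flipset_def)
  have cF: "odd (card ?F) \<longleftrightarrow> ?c \<in> set K"
  proof (cases "?c \<in> set K")
    case True then have "?F = {eq n ?c}" by (auto simp: set_es)
    then show ?thesis using True by simp
  next
    case False then have "?F = {}" by (auto simp: set_es)
    then show ?thesis using False by simp
  qed
  have nF: "n \<notin> ?F" by auto
  let ?w2 = "?w1(n := x n \<noteq> (?c \<in> set K))"
  have P2: "colpar ?E (\<lambda>_. n) ?w1 = ?w2"
  proof
    fix j
    show "colpar ?E (\<lambda>_. n) ?w1 j = ?w2 j"
    proof (cases "j = n")
      case True
      then show ?thesis using cardF nF by (simp add: colpar_def flipset_def) (use cF in auto)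
    next
      case False
      then have "{a \<in> ?E. n = j \<and> ?w1 a} = {}" by auto
      then show ?thesis using False by (simp add: colpar_def)
    qed
  qed
  have w2: "?w2 = flipset ?F (x(n := x n \<noteq> (?c \<in> set K)))"
    using nF by (auto simp: flipset_def fun_eq_iff)
  have z2: "zc n m K (x(n := x n \<noteq> (?c \<in> set K)))" using z big by (auto simp: zc_def)
  have zw2: "zc n m K ?w2" unfolding w2 by (rule zc_flip[OF z2 FE])
  have cw2: "cnt n ?w2 = ?c"
  proof -
    have "cnt n ?w2 = cnt n (x(n := x n \<noteq> (?c \<in> set K)))" unfolding w2 by (rule cnt_flip[OF FE])
    also have "\<dots> = ?c" unfolding cnt_def by (rule arg_cong[where f=card]) auto
    finally show ?thesis .
  qed
  have "run (Wc n m K @ Pc n K @ Wc n m K) (ket x) = run (Wc n m K) (ket ?w2)"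
    unfolding run_append W1 P_ket[OF Kne] P2 ..
  also have "\<dots> = ket (flipset ?F ?w2)" unfolding W_ket[OF zw2] cw2 ..
  also have "\<dots> = ket (x(n := x n \<noteq> (?c \<in> set K)))" unfolding w2 flipset_invol ..
  finally have main: "run (Wc n m K @ Pc n K @ Wc n m K) (ket x) = ket (x(n := x n \<noteq> (?c \<in> set K)))" .
  then show ?thesis
    by (cases fl) (simp_all add: circ_def run_append X_ket run_Nil)
qed

end


definition lsz :: "layer \<Rightarrow> nat" where "lsz L = sum_list (map gate_size L)"
definition gW :: "terms \<Rightarrow> nat" where "gW T = sum_list (map (\<lambda>x. length (fst x) + 1) T)"

lemma csize_append: "csize (C1 @ C2) = csize C1 + csize C2"
  by (simp add: csize_def)
lemma csize_Cons: "csize (L # C) = lsz L + csize C"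
  by (simp add: csize_def lsz_def)
lemma csize_Nil: "csize [] = 0"
  by (simp add: csize_def)

lemma map_nth_idx: "map (\<lambda>i. f (T ! i)) [0..<length T] = map f T"
  by (rule nth_equalityI) auto

lemma sum_idx_gW: "sum_list (map (\<lambda>i. length (gS T i) + 1) [0..<length T]) = gW T"
  unfolding gS_def gW_def by (subst map_nth_idx[of "\<lambda>x. length (fst x) + 1"]) simp

lemma sum_idx_gW': "sum_list (map (\<lambda>i. Suc (length (gS T i))) [0..<length T]) = gW T"
  using sum_idx_gW by simp

lemma finite_gidx: "finite (gidx T)"
proof -
  have "gidx T = (SIGMA i:{..<length T}. {..length (gS T i)})" by (auto simp: gidx_def)
  then show ?thesis by auto
qed

lemma lsz_G1s: "lsz (map (\<lambda>q. G1 q U) qs) = length qs"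
  by (induction qs) (auto simp: lsz_def)

lemma card_gidx: "card (gidx T) = gW T"
proof -
  have "gidx T = (SIGMA i:{..<length T}. {..length (gS T i)})" by (auto simp: gidx_def)
  then have "card (gidx T) = (\<Sum>i<length T. card {..length (gS T i)})" by (simp add: card_SigmaI)
  also have "\<dots> = (\<Sum>i<length T. length (gS T i) + 1)" by simp
  also have "\<dots> = sum_list (map (\<lambda>i. length (gS T i) + 1) [0..<length T])"
    by (simp add: interv_sum_list_conv_sum_set_nat atLeast0LessThan)
  finally show ?thesis by (simp add: sum_idx_gW')
qed

context
  fixes T :: terms and an :: "nat \<Rightarrow> nat \<Rightarrow> nat"
  assumes ok: "gok T an"
begin

lemma lsz_LH: "lsz (gLH T an) = gW T"
proof -
  have "lsz (gLH T an) = length (gancs T an)" by (simp add: gLH_def lsz_G1s)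
  also have "\<dots> = sum_list (map (\<lambda>i. length (gS T i) + 1) [0..<length T])"
    by (simp add: gancs_def length_concat o_def)
  finally show ?thesis by (simp add: sum_idx_gW')
qed

lemma lsz_L3: "lsz (gL3 T an) = gW T"
proof -
  have "lsz (gL3 T an) = sum_list (map (\<lambda>i. length (gS T i) + 1) [0..<length T])"
    by (simp add: gL3_def lsz_def o_def)
  then show ?thesis by (simp add: sum_idx_gW')
qed

lemma lsz_L5: "lsz (gL5 T an) \<le> gW T"
proof -
  have "lsz (gL5 T an) = length T" by (simp add: gL5_def lsz_def o_def sum_list_triv)
  also have "length T \<le> gW T" unfolding gW_def
    by (induction T) auto
  finally show ?thesis .
qed

lemma lsz_L1: "lsz (gL1 T an) \<le> 2 * gW T"
proof -
  have d: "distinct (concat (map (gtg T an) (gsrcs T an)))"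
    by (rule distinct_concat_map) (auto simp: gsrcs_def distinct_gtg[OF ok] dest: gtg_disj[OF ok])
  have "lsz (gL1 T an) = sum_list (map (\<lambda>q. length (gtg T an q) + 1) (gsrcs T an))"
    by (simp add: gL1_def lsz_def o_def)
  also have "\<dots> \<le> sum_list (map (\<lambda>q. 2 * length (gtg T an q)) (gsrcs T an))"
  proof (rule sum_list_mono)
    fix q assume "q \<in> set (gsrcs T an)"
    then have "gtg T an q \<noteq> []" by (simp add: gsrcs_def)
    then show "length (gtg T an q) + 1 \<le> 2 * length (gtg T an q)" by (cases "gtg T an q") auto
  qed
  also have "\<dots> = 2 * length (concat (map (gtg T an) (gsrcs T an)))"
    by (simp add: length_concat sum_list_const_mult o_def)
  also have "length (concat (map (gtg T an) (gsrcs T an))) = card (gcopies T an)"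
  proof -
    have "set (concat (map (gtg T an) (gsrcs T an))) = gcopies T an"
      using concat_tlist_L1[OF ok] by (simp add: gL1_def o_def)
    then show ?thesis using distinct_card[OF d] by simp
  qed
  also have "card (gcopies T an) \<le> card (ganc T an)"
    by (rule card_mono[OF finite_ganc[OF ok] copies_sub[OF ok]])
  also have "card (ganc T an) \<le> card (gidx T)" unfolding ganc_def by (rule card_image_le) (rule finite_gidx)
  finally show ?thesis by (simp add: card_gidx)
qed

lemma csize_gadget: "csize (gadget T an) \<le> 11 * gW T"
  using lsz_L1 lsz_LH lsz_L3 lsz_L5 by (simp add: gadget_def csize_Cons csize_Nil)

end


lemma gW_append: "gW (A @ B) = gW A + gW B" by (simp add: gW_def)
lemma gW_concat: "gW (concat Ts) = sum_list (map gW Ts)"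
  by (induction Ts) (simp_all add: gW_def)
lemma gW_neg: "gW (neg_terms T) = gW T"
  by (induction T) (auto simp: gW_def neg_terms_def)

lemma gW_KL: "gW (termsKL n m k l) = 7 * n + 2"
proof -
  have "gW (concat (map (\<lambda>j. [([j], th m l / 2), ([yq n k l], th m l / 2),
       ([j, yq n k l], - (th m l / 2))]) [0..<n])) = 7 * n"
    by (simp only: gW_concat map_map o_def) (simp add: gW_def sum_list_triv)
  then show ?thesis by (simp add: termsKL_def gW_append gW_def)
qed

lemma gW_TK: "gW (TK n m K) = length K * (m * (7 * n + 2))"
  by (simp add: TK_def gW_concat o_def gW_KL sum_list_triv)

lemma length_subseq_le: "S \<in> set (subseqs xs) \<Longrightarrow> length S \<le> length xs"
proof (induction xs arbitrary: S)
  case Nil then show ?case by simp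
next
  case (Cons x xs)
  then show ?case by (auto simp: Let_def) (fastforce)
qed

lemma gW_D: "gW (termsD n m k) \<le> 2 ^ m * (2 * m + 3)"
proof -
  have "gW (termsD n m k) = sum_list (map (\<lambda>S. gW ((eq n k # S, pi / 2 ^ m) # (if S = [] then [] else [(S, - (pi / 2 ^ m))])))
      (subseqs (Ylist n m k)))"
    by (simp only: termsD_def gW_concat map_map o_def)
  also have "\<dots> = sum_list (map (\<lambda>S. length S + 2 + (if S = [] then 0 else length S + 1)) (subseqs (Ylist n m k)))"
    by (rule arg_cong[where f=sum_list], rule map_cong) (auto simp: gW_def)
  also have "\<dots> \<le> sum_list (map (\<lambda>S. 2 * m + 3) (subseqs (Ylist n m k)))"
  proof (rule sum_list_mono)
    fix S assume "S \<in> set (subseqs (Ylist n m k))"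
    then have "length S \<le> m" using length_subseq_le by (fastforce simp: Ylist_def)
    then show "length S + 2 + (if S = [] then 0 else length S + 1) \<le> 2 * m + 3" by auto
  qed
  also have "\<dots> = 2 ^ m * (2 * m + 3)"
    by (simp add: sum_list_triv length_subseqs Ylist_def)
  finally show ?thesis .
qed

lemma gW_TD: "gW (TD n m K) \<le> length K * (2 ^ m * (2 * m + 3))"
proof -
  have "gW (TD n m K) = sum_list (map (\<lambda>k. gW (termsD n m k)) K)"
    by (simp add: TD_def gW_concat o_def)
  also have "\<dots> \<le> sum_list (map (\<lambda>k. 2 ^ m * (2 * m + 3)) K)"
    by (rule sum_list_mono) (rule gW_D)
  finally show ?thesis by (simp add: sum_list_triv)
qed

lemma lsz_LHq: "lsz (LH qs) = length qs" by (simp add: LH_def lsz_G1s)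
lemma lsz_Fan: "lsz [FanOut y ts] = length ts + 1" by (simp add: lsz_def)
lemma lsz_X: "lsz [G1 q U] = 1" by (simp add: lsz_def)

lemma length_es: "length (es n K) = length K" by (simp add: es_def)

lemma length_ys: "length (ys n m K) = length K * m"
  by (simp add: ys_def length_concat o_def Ylist_def sum_list_triv)

lemma csize_Wc: "csize (Wc n m K) \<le> 4 * (length K * m) + 2 * length K +
   22 * (length K * (m * (7 * n + 2))) + 11 * (length K * (2 ^ m * (2 * m + 3)))"
proof -
  have "csize (Wc n m K) = 4 * (length K * m) + 2 * length K + csize (gadget (TK n m K) (ak n)) +
      csize (gadget (TD n m K) (ad n)) + csize (gadget (neg_terms (TK n m K)) (ak n))"
    by (simp add: Wc_def csize_append csize_Cons csize_Nil lsz_LHq length_ys length_es)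
  moreover have "csize (gadget (TK n m K) (ak n)) \<le> 11 * (length K * (m * (7 * n + 2)))"
    using csize_gadget[OF gok_TK] gW_TK by simp
  moreover have "csize (gadget (neg_terms (TK n m K)) (ak n)) \<le> 11 * (length K * (m * (7 * n + 2)))"
    using csize_gadget[OF gok_neg[OF gok_TK]] gW_TK gW_neg by simp
  moreover have "csize (gadget (TD n m K) (ad n)) \<le> 11 * (length K * (2 ^ m * (2 * m + 3)))"
    using csize_gadget[OF gok_TD, of n m K] gW_TD[of n m K] by linarith
  ultimately show ?thesis by linarith
qed

lemma csize_circ: "csize (circ n m K fl) \<le> 2 * (4 * (length K * m) + 2 * length K +
   22 * (length K * (m * (7 * n + 2))) + 11 * (length K * (2 ^ m * (2 * m + 3)))) + 3 * length K + 4"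
proof -
  have "csize (Pc n K) = 3 * length K + 3"
    by (simp add: Pc_def csize_Cons csize_Nil lsz_LHq lsz_Fan length_es)
  moreover have "csize (if fl then [[G1 n Xm]] else []) \<le> 1"
    by (simp add: csize_Cons csize_Nil lsz_X)
  ultimately show ?thesis using csize_Wc[of n m K] by (simp add: circ_def csize_append)
qed

lemma depth_circ: "depth (circ n m K fl) \<le> 70"
  by (simp add: depth_def circ_def Wc_def Pc_def gadget_def)

lemma wf_LH: "distinct qs \<Longrightarrow> wf_layer (LH qs)"
  unfolding LH_def
proof (rule wf_layerI)
  show "\<forall>g\<in>set (map (\<lambda>q. G1 q Hm) qs). okg g" by (auto simp: unitary_Hm)
  assume "distinct qs"
  then show "distinct (concat (map qlist (map (\<lambda>q. G1 q Hm) qs)))" by (simp only: qlist_G1s)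
qed

lemma wf_append: "wf_circuit (C1 @ C2) \<longleftrightarrow> wf_circuit C1 \<and> wf_circuit C2"
  by (auto simp: wf_circuit_def)
lemma wf_single: "wf_circuit [L] \<longleftrightarrow> wf_layer L"
  by (simp add: wf_circuit_def)

lemma wf_circ:
  assumes "distinct K" "K \<noteq> []"
  shows "wf_circuit (circ n m K fl)"
proof -
  have dY: "distinct (ys n m K)" and dE: "distinct (es n K)" using assms by (simp_all add: distinct_ys distinct_es)
  have nE: "n \<notin> set (es n K)" by (auto simp: set_es)
  have W: "wf_circuit (Wc n m K)"
    unfolding Wc_def wf_append wf_single
    using wf_LH[OF dY] wf_LH[OF dE] wf_gadget[OF gok_TK] wf_gadget[OF gok_TD] wf_gadget[OF gok_neg[OF gok_TK]]
    by simp
  have F: "wf_layer [FanOut n (es n K)]"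
    by (rule wf_layerI) (use assms dE nE in \<open>auto simp: es_def\<close>)
  have P: "wf_circuit (Pc n K)"
    using wf_LH[of "n # es n K"] dE nE F by (simp add: Pc_def wf_circuit_def)
  have X: "wf_layer [G1 n Xm]" by (rule wf_layerI) (auto simp: unitary_Xm)
  show ?thesis using W P X by (simp add: circ_def wf_append wf_single) (simp add: wf_circuit_def)
qed



definition mm :: "nat \<Rightarrow> nat" where "mm n = (LEAST m. n < 2 ^ m)"

lemma mm_props:
  assumes "1 \<le> n"
  shows "0 < mm n" "n < 2 ^ mm n" "2 ^ mm n \<le> 2 * n" "real (mm n) \<le> 1 + log 2 (real n)"
proof -
  have ex: "\<exists>m. n < 2 ^ m" by (intro exI[of _ n]) (rule less_exp)
  show lt: "n < 2 ^ mm n" unfolding mm_def by (rule LeastI_ex[OF ex])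
  show pos: "0 < mm n"
  proof (rule ccontr)
    assume "\<not> 0 < mm n"
    then have "mm n = 0" by simp
    then show False using lt assms by simp
  qed
  have "\<not> n < 2 ^ (mm n - 1)"
    unfolding mm_def by (rule not_less_Least) (use pos in \<open>simp add: mm_def\<close>)
  then have le: "2 ^ (mm n - 1) \<le> n" by simp
  have "(2::nat) ^ mm n = 2 * 2 ^ (mm n - 1)" using pos by (metis Suc_diff_1 power_Suc)
  then show "2 ^ mm n \<le> 2 * n" using le by simp
  have "real (mm n - 1) \<le> log 2 (real n)" by (rule le_log2_of_power[OF le])
  then show "real (mm n) \<le> 1 + log 2 (real n)" using pos by (simp add: of_nat_diff)
qed

lemma size_arith:
  fixes L n m :: nat
  assumes L: "1 \<le> L" and n: "1 \<le> n" and m: "1 \<le> m" and p: "2 ^ m \<le> 2 * n"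
  shows "2 * (4 * (L * m) + 2 * L + 22 * (L * (m * (7 * n + 2))) + 11 * (L * (2 ^ m * (2 * m + 3))))
         + 3 * L + 4 \<le> 640 * (L * n * m)"
proof -
  define a where "a = L * n * m"
  have a1: "1 \<le> a" using L n m by (simp add: a_def)
  have Lm: "L * m \<le> a" using n by (simp add: a_def)
  have La: "L \<le> a" using n m by (simp add: a_def)
  have t3: "L * (m * (7 * n + 2)) \<le> 9 * a"
  proof -
    have "L * (m * (7 * n + 2)) = 7 * a + 2 * (L * m)" by (simp add: a_def algebra_simps)
    then show ?thesis using Lm by simp
  qed
  have t4: "L * (2 ^ m * (2 * m + 3)) \<le> 10 * a"
  proof -
    have "2 ^ m * (2 * m + 3) \<le> (2 * n) * (5 * m)" using p m by (intro mult_le_mono) auto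
    then have "L * (2 ^ m * (2 * m + 3)) \<le> L * ((2 * n) * (5 * m))" by simp
    also have "\<dots> = 10 * a" by (simp add: a_def algebra_simps)
    finally show ?thesis .
  qed
  have lin: "\<And>(p::nat) (q::nat) (r::nat) (s::nat) (b::nat). p \<le> b \<Longrightarrow> q \<le> b \<Longrightarrow> r \<le> 9 * b \<Longrightarrow> s \<le> 10 * b \<Longrightarrow> 1 \<le> b \<Longrightarrow>
     2 * (4 * p + 2 * q + 22 * r + 11 * s) + 3 * q + 4 \<le> 640 * b"
  proof -
    fix p q r s b :: nat
    assume a: "p \<le> b" "q \<le> b" "r \<le> 9 * b" "s \<le> 10 * b" "1 \<le> b"
    have "2 * (4 * p + 2 * q + 22 * r + 11 * s) + 3 * q + 4 \<le> 2 * (4 * b + 2 * b + 22 * (9*b) + 11 * (10*b)) + 3 * b + 4 * b"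
      using a by (intro add_mono mult_le_mono) auto
    then show "2 * (4 * p + 2 * q + 22 * r + 11 * s) + 3 * q + 4 \<le> 640 * b" by simp
  qed
  show ?thesis unfolding a_def[symmetric] by (rule lin[OF Lm La t3 t4 a1])
qed

lemma main_construction:
  assumes n: "1 \<le> n" and dK: "distinct K" and Kne: "K \<noteq> []" and Kn: "\<forall>k\<in>set K. k \<le> n"
    and TH: "\<And>x. TH n t x \<longleftrightarrow> ((cnt n x \<in> set K) \<noteq> fl)"
  shows "implements_TH n t (circ n (mm n) K fl) \<and> real (depth (circ n (mm n) K fl)) \<le> 1000 \<and>
         real (csize (circ n (mm n) K fl)) \<le> 1000 * real (length K) * real n * (1 + log 2 (real n))"
proof (intro conjI)
  let ?m = "mm n"
  note mp = mm_props[OF n]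
  show "implements_TH n t (circ n ?m K fl)"
    unfolding implements_TH_def
  proof (intro conjI allI impI)
    show "wf_circuit (circ n ?m K fl)" by (rule wf_circ[OF dK Kne])
    fix x :: basis assume x: "\<forall>i>n. \<not> x i"
    have r: "run (circ n ?m K fl) (ket x) = ket (x(n := (x n \<noteq> (cnt n x \<in> set K)) \<noteq> fl))"
      by (rule circ_correct[OF mp(1) dK Kn mp(2) Kne x])
    have eq: "((x n \<noteq> (cnt n x \<in> set K)) \<noteq> fl) = (x n \<noteq> TH n t x)"
      using TH[of x] by auto
    show "run (circ n ?m K fl) (ket x) = ket (x(n := x n \<noteq> TH n t x))" using r by (simp only: eq)
  qed
  show "real (depth (circ n ?m K fl)) \<le> 1000"
    using depth_circ[of n ?m K fl] by simp
  have L1: "1 \<le> length K" using Kne by (cases K) auto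
  have m1: "1 \<le> ?m" using mp(1) by simp
  have "csize (circ n ?m K fl) \<le> 640 * (length K * n * ?m)"
    by (rule order_trans[OF csize_circ size_arith[OF L1 n m1 mp(3)]])
  then have "real (csize (circ n ?m K fl)) \<le> 640 * (real (length K) * real n * real ?m)"
    by (metis of_nat_le_iff of_nat_mult of_nat_numeral)
  also have "\<dots> \<le> 640 * (real (length K) * real n * (1 + log 2 (real n)))"
    using mp(4) by (intro mult_left_mono) auto
  also have "\<dots> \<le> 1000 * (real (length K) * real n * (1 + log 2 (real n)))"
  proof (rule mult_right_mono)
    have "0 \<le> log 2 (real n)" using n by simp
    then show "0 \<le> real (length K) * real n * (1 + log 2 (real n))" by simp
  qed simp
  finally show "real (csize (circ n ?m K fl)) \<le> 1000 * real (length K) * real n * (1 + log 2 (real n))"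
    by (simp add: mult.assoc)
qed

theorem lemma3:
  shows "\<exists>c::real.
    (\<forall>n t. 1 \<le> t \<and> t \<le> (n + 1) div 2 \<longrightarrow>
       (\<exists>C. implements_TH n t C \<and> real (depth C) \<le> c \<and>
            real (csize C) \<le> c * real t * real n * (1 + log 2 (real n)))) \<and>
    (\<forall>n t. 1 \<le> t \<and> (n + 1) div 2 \<le> t \<and> t \<le> n \<longrightarrow>
       (\<exists>C. implements_TH n t C \<and> real (depth C) \<le> c \<and>
            real (csize C) \<le> c * real (n - t + 1) * real n * (1 + log 2 (real n))))"
proof (intro exI[of _ 1000] conjI allI impI)
  fix n t :: nat
  assume a: "1 \<le> t \<and> t \<le> (n + 1) div 2"
  then have n: "1 \<le> n" and tn: "t \<le> n" by auto
  have TH: "TH n t x \<longleftrightarrow> ((cnt n x \<in> set [0..<t]) \<noteq> True)" for x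
    unfolding TH_def cnt_def by auto
  have Kn: "\<forall>k\<in>set [0..<t]. k \<le> n" using tn by auto
  have ne: "[0..<t] \<noteq> []" using a by simp
  have mc: "implements_TH n t (circ n (mm n) [0..<t] True) \<and> real (depth (circ n (mm n) [0..<t] True)) \<le> 1000 \<and>
         real (csize (circ n (mm n) [0..<t] True)) \<le> 1000 * real (length [0..<t]) * real n * (1 + log 2 (real n))"
    by (rule main_construction[OF n distinct_upt ne Kn TH])
  then show "\<exists>C. implements_TH n t C \<and> real (depth C) \<le> 1000 \<and>
            real (csize C) \<le> 1000 * real t * real n * (1 + log 2 (real n))"
    by (intro exI[of _ "circ n (mm n) [0..<t] True"]) simp
next
  fix n t :: nat
  assume a: "1 \<le> t \<and> (n + 1) div 2 \<le> t \<and> t \<le> n"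
  then have n: "1 \<le> n" and tn: "t \<le> n" by auto
  have TH: "TH n t x \<longleftrightarrow> ((cnt n x \<in> set [t..<n+1]) \<noteq> False)" for x
  proof -
    have "cnt n x \<le> n" by (rule cnt_le)
    then show ?thesis unfolding TH_def cnt_def by auto
  qed
  have Kn: "\<forall>k\<in>set [t..<n+1]. k \<le> n" by auto
  have ne: "[t..<n+1] \<noteq> []" using tn by simp
  have len: "length [t..<n+1] = n - t + 1" using tn by simp
  have mc: "implements_TH n t (circ n (mm n) [t..<n+1] False) \<and> real (depth (circ n (mm n) [t..<n+1] False)) \<le> 1000 \<and>
         real (csize (circ n (mm n) [t..<n+1] False)) \<le> 1000 * real (length [t..<n+1]) * real n * (1 + log 2 (real n))"
    by (rule main_construction[OF n distinct_upt ne Kn TH])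
  then show "\<exists>C. implements_TH n t C \<and> real (depth C) \<le> 1000 \<and>
            real (csize C) \<le> 1000 * real (n - t + 1) * real n * (1 + log 2 (real n))"
    unfolding len by (intro exI[of _ "circ n (mm n) [t..<n+1] False"]) simp
qed


end
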